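(* Let $\phi\in\mathcal S_d$ with $\sup_\xi|\widehat\phi(\xi)|=1$ and $\xi_0\in\Omega(\phi)$. Suppose there exist $\mathbf m=(m_1,\dots,m_d)\in\mathbb{N}_+^d$ and $k\ge1$ such that on a neighborhood $\mathcal U$ of $0$, $\Gamma_{\xi_0}(\xi)=i\alpha\cdot\xi-i\Big(\sum_{|\beta:2\mathbf m|\ge1}A_\beta\xi^\beta\Big)-\sum_{|\beta:2\mathbf m|\ge k}B_\beta\xi^\beta=i\alpha\cdot\xi-i(Q(\xi)+\widetilde Q(\xi))-(R(\xi)+\widetilde R(\xi))$, where $\alpha\in\mathbb{R}^d$, $Q(\xi)=\sum_{|\beta:2\mathbf m|=1}A_\beta\xi^\beta$ and $R(\xi)=\sum_{|\beta:2\mathbf m|=k}B_\beta\xi^\beta$ are real-valued polynomials with $R$ positive definite, and $\widetilde Q=\sum_{|\beta:2\mathbf m|>1}A_\beta\xi^\beta$, $\widetilde R=\sum_{|\beta:2\mathbf m|>k}B_\beta\xi^\beta$ are real power series converging absolutely and uniformly on $\mathcal U$. If $k=1$, then $\xi_0$ is of positive homogeneous type for $\widehat\phi$ with $R_{\xi_0}=R$, $Q_{\xi_0}=Q$, $P_{\xi_0}=R+iQ$. If $k>1$ and $|Q|$ is positive definite, then $\xi_0$ is of imaginary homogeneous type for $\widehat\phi$ with $Q_{\xi_0}=Q$. In either case the drift is $\alpha_{\xi_0}=\alpha$ and the homogeneous order is $\mu_{\xi_0}=\sum_{j=1}^d\frac1{2m_j}$.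
   Context: For multi-index $\beta$ and $\mathbf n\in\mathbb{N}_+^d$, $|\beta:\mathbf n|=\sum_j\beta_j/n_j$, $\xi^\beta=\prod_j\xi_j^{\beta_j}$. $t^E:=\exp(\log(t)E)$. $P$ homogeneous w.r.t. $E$: $P(t^E\xi)=tP(\xi)$; $\mathrm{Exp}(P)$ = set of such $E$. Positive homogeneous: real, continuous, positive definite ($\ge0$, zero only at $0$), $\mathrm{Exp}(P)\ne\emptyset$, $\{P=1\}$ compact; homogeneous order $\mu_P=\mathrm{tr}E$, $E\in\mathrm{Exp}(P)$. Subhomogeneous w.r.t. $E$ (with $\|t^E\|\to0$ as $t\to0$): for each $\epsilon>0$, compact $K$ there is $\tau>0$ with $|\widetilde P(t^E\xi)|\le\epsilon t$, $0<t<\tau$, $\xi\in K$; strongly subhomogeneous of order $l$: $C^l$ near $0$, $|t^k\partial_t^k\widetilde P(t^E\xi)|\le\epsilon t$ for $k\le l$. $\mathcal S_d$ = $\phi:\mathbb{Z}^d\to\mathbb{C}$ with all $\sum_x|x^\beta\phi(x)|<\infty$; $\widehat\phi(\xi)=\sum_x\phi(x)e^{ix\cdot\xi}$; $\Omega(\phi)=\{\xi\in(-\pi,\pi]^d:|\widehat\phi(\xi)|=1\}$; $\Gamma_{\xi_0}(\xi)=\log(\widehat\phi(\xi+\xi_0)/\widehat\phi(\xi_0))$ (principal branch) near $0$. $\xi_0$ is of positive homogeneous type if $\Gamma_{\xi_0}=i\alpha\cdot\xi-i(Q+\widetilde Q)-(R+\widetilde R)$ ($Q,R$ real polynomials vanishing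 at $0$ without linear terms; $\widetilde Q,\widetilde R$ real smooth vanishing at $0$) with $R$ positive homogeneous and some $E\in\mathrm{Exp}(R)$ with $Q$ homogeneous w.r.t. $E$ and $\widetilde Q,\widetilde R$ subhomogeneous w.r.t. $E$; $\mu_{\xi_0}=\mu_R$. Imaginary homogeneous type: $|Q|,R$ positive homogeneous, some $E\in\mathrm{Exp}(|Q|)$ and $k'>1$ with $R$ homogeneous w.r.t. $E/k'$, $\widetilde Q$ strongly subhomogeneous w.r.t. $E$ of order 2, $\widetilde R$ strongly subhomogeneous w.r.t. $E/k'$ of order 1; $\mu_{\xi_0}=\mu_{|Q|}$. Drift $\alpha_{\xi_0}=\alpha$. *)

theory Defs
  imports "HOL-Analysis.Analysis"
begin

text \<open>Multi-indices beta are functions 'n => nat; the dimension d is CARD('n).\<close>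

definition xmon :: "real^'n \<Rightarrow> ('n \<Rightarrow> nat) \<Rightarrow> real" where
  "xmon \<xi> \<beta> = (\<Prod>j\<in>UNIV. (\<xi>$j) ^ (\<beta> j))"

definition imonom :: "int^'n \<Rightarrow> ('n \<Rightarrow> nat) \<Rightarrow> real" where
  "imonom x \<beta> = (\<Prod>j\<in>UNIV. real_of_int (x$j) ^ (\<beta> j))"

definition wdeg :: "('n::finite \<Rightarrow> nat) \<Rightarrow> ('n \<Rightarrow> nat) \<Rightarrow> real" where
  "wdeg \<beta> n = (\<Sum>j\<in>UNIV. real (\<beta> j) / real (n j))"

fun matpow :: "real^'n^'n \<Rightarrow> nat \<Rightarrow> real^'n^'n" where
  "matpow A 0 = mat 1"
| "matpow A (Suc k) = A ** matpow A k"

definition mexp :: "real^'n^'n \<Rightarrow> real^'n^'n" where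
  "mexp A = (\<Sum>k. (1 / fact k) *\<^sub>R matpow A k)"

definition tpow :: "real \<Rightarrow> real^'n^'n \<Rightarrow> real^'n^'n" where
  "tpow t E = mexp (ln t *\<^sub>R E)"

definition homogeneous_wrt :: "real^'n^'n \<Rightarrow> (real^'n \<Rightarrow> 'a::real_vector) \<Rightarrow> bool" where
  "homogeneous_wrt E P \<longleftrightarrow> (\<forall>t>0. \<forall>\<xi>. P (tpow t E *v \<xi>) = t *\<^sub>R P \<xi>)"

definition Exps :: "(real^'n \<Rightarrow> 'a::real_vector) \<Rightarrow> (real^'n^'n) set" where
  "Exps P = {E. homogeneous_wrt E P}"

definition pos_homogeneous :: "(real^'n \<Rightarrow> real) \<Rightarrow> bool" where
  "pos_homogeneous P \<longleftrightarrow> continuous_on UNIV P \<and> (\<forall>\<xi>. P \<xi> \<ge> 0) \<and> (\<forall>\<xi>. P \<xi> = 0 \<longleftrightarrow> \<xi> = 0)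
     \<and> Exps P \<noteq> {} \<and> compact {\<xi>. P \<xi> = 1}"

definition hom_order :: "(real^'n \<Rightarrow> real) \<Rightarrow> real" where
  "hom_order P = trace (SOME E. E \<in> Exps P)"

definition contracting :: "real^'n^'n \<Rightarrow> bool" where
  "contracting E \<longleftrightarrow> ((\<lambda>t. norm (tpow t E)) \<longlongrightarrow> 0) (at_right 0)"

definition subhomogeneous :: "real^'n^'n \<Rightarrow> (real^'n \<Rightarrow> real) \<Rightarrow> bool" where
  "subhomogeneous E P \<longleftrightarrow> contracting E \<and>
     (\<forall>\<epsilon>>0. \<forall>K. compact K \<longrightarrow>
        (\<exists>\<tau>>0. \<forall>t. 0 < t \<and> t < \<tau> \<longrightarrow> (\<forall>\<xi>\<in>K. \<bar>P (tpow t E *v \<xi>)\<bar> \<le> \<epsilon> * t)))"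

definition pderiv_dir :: "'n \<Rightarrow> (real^'n \<Rightarrow> real) \<Rightarrow> real^'n \<Rightarrow> real" where
  "pderiv_dir j f x = deriv (\<lambda>s. f (x + s *\<^sub>R axis j 1)) 0"

fun ipderiv :: "'n list \<Rightarrow> (real^'n \<Rightarrow> real) \<Rightarrow> real^'n \<Rightarrow> real" where
  "ipderiv [] f = f"
| "ipderiv (j # js) f = pderiv_dir j (ipderiv js f)"

definition C_k_on :: "nat \<Rightarrow> (real^'n) set \<Rightarrow> (real^'n \<Rightarrow> real) \<Rightarrow> bool" where
  "C_k_on l U f \<longleftrightarrow>
     (\<forall>js. length js < l \<longrightarrow> (\<forall>j. \<forall>x\<in>U. (\<lambda>s. ipderiv js f (x + s *\<^sub>R axis j 1)) differentiable (at 0)))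
   \<and> (\<forall>js. length js \<le> l \<longrightarrow> continuous_on U (ipderiv js f))"

definition C_k_near0 :: "nat \<Rightarrow> (real^'n \<Rightarrow> real) \<Rightarrow> bool" where
  "C_k_near0 l f \<longleftrightarrow> (\<exists>U. open U \<and> 0 \<in> U \<and> C_k_on l U f)"

definition smooth_near0 :: "(real^'n \<Rightarrow> real) \<Rightarrow> bool" where
  "smooth_near0 f \<longleftrightarrow> (\<exists>U. open U \<and> 0 \<in> U \<and> (\<forall>l. C_k_on l U f))"

definition strongly_subhomogeneous :: "real^'n^'n \<Rightarrow> nat \<Rightarrow> (real^'n \<Rightarrow> real) \<Rightarrow> bool" where
  "strongly_subhomogeneous E l P \<longleftrightarrow> contracting E \<and> C_k_near0 l P \<and>
     (\<forall>\<epsilon>>0. \<forall>K. compact K \<longrightarrow>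
        (\<exists>\<tau>>0. \<forall>t. 0 < t \<and> t < \<tau> \<longrightarrow> (\<forall>\<xi>\<in>K. \<forall>k\<le>l.
            \<bar>t ^ k * (deriv ^^ k) (\<lambda>s. P (tpow s E *v \<xi>)) t\<bar> \<le> \<epsilon> * t)))"

definition poly_no_lin :: "(real^'n \<Rightarrow> real) \<Rightarrow> bool" where
  "poly_no_lin P \<longleftrightarrow> (\<exists>F c. finite F \<and> (\<forall>\<beta>\<in>F. (\<Sum>j\<in>UNIV. \<beta> j) \<ge> 2)
      \<and> (\<forall>\<xi>. P \<xi> = (\<Sum>\<beta>\<in>F. c \<beta> * xmon \<xi> \<beta>)))"

definition Schwartz_d :: "(int^'n \<Rightarrow> complex) \<Rightarrow> bool" where
  "Schwartz_d \<phi> \<longleftrightarrow> (\<forall>\<beta>::'n \<Rightarrow> nat. (\<lambda>x. norm (imonom x \<beta> *\<^sub>R \<phi> x)) summable_on UNIV)"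

definition idot :: "int^'n \<Rightarrow> real^'n \<Rightarrow> real" where
  "idot x \<xi> = (\<Sum>j\<in>UNIV. real_of_int (x$j) * \<xi>$j)"

definition fhat :: "(int^'n \<Rightarrow> complex) \<Rightarrow> real^'n \<Rightarrow> complex" where
  "fhat \<phi> \<xi> = (\<Sum>\<^sub>\<infinity>x. \<phi> x * cis (idot x \<xi>))"

definition Omega :: "(int^'n \<Rightarrow> complex) \<Rightarrow> (real^'n) set" where
  "Omega \<phi> = {\<xi>. (\<forall>j. - pi < \<xi>$j \<and> \<xi>$j \<le> pi) \<and> cmod (fhat \<phi> \<xi>) = 1}"

definition Gamma_at :: "(int^'n \<Rightarrow> complex) \<Rightarrow> real^'n \<Rightarrow> real^'n \<Rightarrow> complex" where
  "Gamma_at \<phi> \<xi>0 \<xi> = Ln (fhat \<phi> (\<xi> + \<xi>0) / fhat \<phi> \<xi>0)"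

definition Gamma_form :: "(int^'n \<Rightarrow> complex) \<Rightarrow> real^'n \<Rightarrow> real^'n
   \<Rightarrow> (real^'n \<Rightarrow> real) \<Rightarrow> (real^'n \<Rightarrow> real) \<Rightarrow> (real^'n \<Rightarrow> real) \<Rightarrow> (real^'n \<Rightarrow> real) \<Rightarrow> bool" where
  "Gamma_form \<phi> \<xi>0 \<alpha> Q Qt R Rt \<longleftrightarrow>
     (\<exists>U. open U \<and> 0 \<in> U \<and> (\<forall>\<xi>\<in>U. Gamma_at \<phi> \<xi>0 \<xi> =
         \<i> * complex_of_real (\<alpha> \<bullet> \<xi>) - \<i> * complex_of_real (Q \<xi> + Qt \<xi>) - complex_of_real (R \<xi> + Rt \<xi>)))
   \<and> poly_no_lin Q \<and> poly_no_lin R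
   \<and> smooth_near0 Qt \<and> smooth_near0 Rt \<and> Qt 0 = 0 \<and> Rt 0 = 0"

definition pos_hom_type :: "(int^'n \<Rightarrow> complex) \<Rightarrow> real^'n \<Rightarrow> real^'n
   \<Rightarrow> (real^'n \<Rightarrow> real) \<Rightarrow> (real^'n \<Rightarrow> real) \<Rightarrow> bool" where
  "pos_hom_type \<phi> \<xi>0 \<alpha> Q R \<longleftrightarrow>
     (\<exists>Qt Rt. Gamma_form \<phi> \<xi>0 \<alpha> Q Qt R Rt \<and> pos_homogeneous R \<and>
        (\<exists>E\<in>Exps R. homogeneous_wrt E Q \<and> subhomogeneous E Qt \<and> subhomogeneous E Rt))"

definition imag_hom_type :: "(int^'n \<Rightarrow> complex) \<Rightarrow> real^'n \<Rightarrow> real^'n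
   \<Rightarrow> (real^'n \<Rightarrow> real) \<Rightarrow> (real^'n \<Rightarrow> real) \<Rightarrow> bool" where
  "imag_hom_type \<phi> \<xi>0 \<alpha> Q R \<longleftrightarrow>
     (\<exists>Qt Rt. Gamma_form \<phi> \<xi>0 \<alpha> Q Qt R Rt \<and> pos_homogeneous (\<lambda>\<xi>. \<bar>Q \<xi>\<bar>) \<and> pos_homogeneous R \<and>
        (\<exists>E\<in>Exps (\<lambda>\<xi>. \<bar>Q \<xi>\<bar>). \<exists>k'>1. homogeneous_wrt ((1 / k') *\<^sub>R E) R
            \<and> strongly_subhomogeneous E 2 Qt \<and> strongly_subhomogeneous ((1 / k') *\<^sub>R E) 1 Rt))"

end

theory Submission
  imports Defs
begin

definition diagm :: "('n::finite \<Rightarrow> real) \<Rightarrow> real^'n^'n" where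
  "diagm a = (\<chi> i j. if i = j then a i else 0)"

lemma diagm_nth[simp]: "diagm a $ i $ j = (if i = j then a i else 0)"
  by (simp add: diagm_def)

lemma mat1_diagm: "mat 1 = diagm (\<lambda>_. 1)"
  by (simp add: mat_def diagm_def)

lemma scaleR_diagm: "c *\<^sub>R diagm a = diagm (\<lambda>i. c * a i)"
  by (simp add: vec_eq_iff)

lemma trace_diagm: "trace (diagm a) = sum a UNIV"
  by (simp add: trace_def)

lemma det_diagm: "det (diagm a) = prod a UNIV"
  by (subst det_diagonal) auto

lemma ifz_mult: "(if P then c else (0::real)) * y = (if P then c * y else 0)"
  by simp

lemma mult_ifz: "y * (if P then c else (0::real)) = (if P then y * c else 0)"
  by simp

lemma diagm_mult: "diagm a ** diagm b = diagm (\<lambda>i. a i * b i)"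
  by (simp add: matrix_matrix_mult_def vec_eq_iff ifz_mult)

lemma matpow_diag: "matpow (diagm a) k = diagm (\<lambda>i. a i ^ k)"
  by (induction k) (simp_all add: mat1_diagm diagm_mult)

lemma diagm_mulv: "diagm a *v x = (\<chi> i. a i * x $ i)"
  by (simp add: matrix_vector_mult_def vec_eq_iff ifz_mult)

definition mx :: "real^'n^'n \<Rightarrow> real" where
  "mx A = (\<Sum>i\<in>UNIV. \<Sum>j\<in>UNIV. \<bar>A $ i $ j\<bar>)"

lemma mx_nonneg: "0 \<le> mx A"
  by (simp add: mx_def sum_nonneg)

lemma entry_le_mx: "\<bar>A $ i $ j\<bar> \<le> mx A"
proof -
  have "\<bar>A $ i $ j\<bar> \<le> (\<Sum>j\<in>UNIV. \<bar>A $ i $ j\<bar>)"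
    by (rule member_le_sum) auto
  also have "\<dots> \<le> mx A" unfolding mx_def
    by (rule member_le_sum[of i UNIV "\<lambda>i. \<Sum>j\<in>UNIV. \<bar>A $ i $ j\<bar>"]) (auto intro: sum_nonneg)
  finally show ?thesis .
qed

lemma norm_le_mx: "norm A \<le> mx A"
proof -
  have "norm A \<le> (\<Sum>i\<in>UNIV. norm (A $ i))" unfolding norm_vec_def
    by (rule L2_set_le_sum) auto
  also have "\<dots> \<le> (\<Sum>i\<in>UNIV. \<Sum>j\<in>UNIV. \<bar>A $ i $ j\<bar>)"
    by (rule sum_mono) (rule norm_le_l1_cart)
  finally show ?thesis by (simp add: mx_def)
qed

lemma mx_mult: "mx (A ** B) \<le> mx A * mx B"
proof -
  have "mx (A ** B) = (\<Sum>i\<in>UNIV. \<Sum>j\<in>UNIV. \<bar>\<Sum>k\<in>UNIV. A $ i $ k * B $ k $ j\<bar>)"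
    by (simp add: mx_def matrix_matrix_mult_def)
  also have "\<dots> \<le> (\<Sum>i\<in>UNIV. \<Sum>j\<in>UNIV. \<Sum>k\<in>UNIV. \<bar>A $ i $ k\<bar> * \<bar>B $ k $ j\<bar>)"
    by (intro sum_mono) (metis (no_types, lifting) abs_mult sum_abs sum.cong)
  also have "\<dots> = (\<Sum>i\<in>UNIV. \<Sum>k\<in>UNIV. \<bar>A $ i $ k\<bar> * (\<Sum>j\<in>UNIV. \<bar>B $ k $ j\<bar>))"
    by (simp add: sum_distrib_left) (subst sum.swap, simp)
  also have "\<dots> \<le> (\<Sum>i\<in>UNIV. \<Sum>k\<in>UNIV. \<bar>A $ i $ k\<bar> * mx B)"
  proof (intro sum_mono mult_left_mono)
    fix k show "(\<Sum>j\<in>UNIV. \<bar>B $ k $ j\<bar>) \<le> mx B" unfolding mx_def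
      by (rule member_le_sum[of k UNIV "\<lambda>i. \<Sum>j\<in>UNIV. \<bar>B $ i $ j\<bar>"]) (auto intro: sum_nonneg)
  qed auto
  also have "\<dots> = mx A * mx B"
    by (simp add: mx_def sum_distrib_right)
  finally show ?thesis .
qed

lemma mx_matpow: fixes A :: "real^'n^'n" shows "mx (matpow A k) \<le> mx (mat 1 :: real^'n^'n) * mx A ^ k"
proof (induction k)
  case 0 then show ?case by simp
next
  case (Suc k)
  have "mx (matpow A (Suc k)) \<le> mx A * mx (matpow A k)" using mx_mult by simp
  also have "\<dots> \<le> mx A * (mx (mat 1 :: real^'n^'n) * mx A ^ k)"
    by (rule mult_left_mono[OF Suc mx_nonneg])
  finally show ?case by (simp add: algebra_simps)
qed

lemma mexp_summable: fixes A :: "real^'n^'n" shows "summable (\<lambda>k. (1 / fact k) *\<^sub>R matpow A k)"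
proof (rule summable_norm_cancel, rule summable_comparison_test)
  define c where "c = mx (mat 1 :: real^'n^'n)"
  show "summable (\<lambda>k. c * (inverse (fact k) * mx A ^ k))"
    by (rule summable_mult, rule summable_exp)
  show "\<exists>N. \<forall>n\<ge>N. norm (norm ((1 / fact n) *\<^sub>R matpow A n)) \<le> c * (inverse (fact n) * mx A ^ n)"
  proof (intro exI allI impI)
    fix n :: nat
    have "norm (norm ((1 / fact n) *\<^sub>R matpow A n)) = (1 / fact n) * norm (matpow A n)" by simp
    also have "\<dots> \<le> (1 / fact n) * (c * mx A ^ n)"
      using order.trans[OF norm_le_mx mx_matpow[of A n]] by (simp add: c_def divide_right_mono)
    finally show "norm (norm ((1 / fact n) *\<^sub>R matpow A n)) \<le> c * (inverse (fact n) * mx A ^ n)"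
      by (simp add: field_simps)
  qed
qed

lemma mexp_nth: fixes A :: "real^'n^'n" shows "mexp A $ i $ j = (\<Sum>k. (1 / fact k) * matpow A k $ i $ j)"
proof -
  have bl: "bounded_linear (\<lambda>M::real^'n^'n. M $ i $ j)"
    using bounded_linear_compose[OF bounded_linear_vec_nth[of j] bounded_linear_vec_nth[of i]] .
  show ?thesis unfolding mexp_def
    using bounded_linear.suminf[OF bl mexp_summable[of A]] by simp
qed

lemma mexp_diagm: "mexp (diagm a) = diagm (\<lambda>i. exp (a i))"
proof -
  have "mexp (diagm a) $ i $ j = diagm (\<lambda>i. exp (a i)) $ i $ j" for i j
  proof (cases "i = j")
    case True
    have "exp (a i) = (\<Sum>k. 1 / fact k * a i ^ k)"
      unfolding exp_def by (simp add: divide_inverse mult.commute)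
    then show ?thesis using True
      by (simp add: mexp_nth matpow_diag)
  next
    case False
    then show ?thesis by (simp add: mexp_nth matpow_diag)
  qed
  then show ?thesis by (simp add: vec_eq_iff)
qed

lemma tpow_diagm: "t > 0 \<Longrightarrow> tpow t (diagm a) = diagm (\<lambda>i. t powr a i)"
  unfolding tpow_def scaleR_diagm mexp_diagm by (simp add: powr_def mult.commute)

lemma tpow_diagm_mulv: "t > 0 \<Longrightarrow> tpow t (diagm a) *v x = (\<chi> i. t powr a i * x $ i)"
  by (simp add: tpow_diagm diagm_mulv)


section \<open>Determinant bounds\<close>

lemma sign_abs: "\<bar>(of_int (sign p) :: real)\<bar> = 1"
  by (simp add: sign_def)

lemma det_bound:
  fixes A :: "real^'n^'n"
  assumes "\<And>i j. \<bar>A $ i $ j\<bar> \<le> B"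
  shows "\<bar>det A\<bar> \<le> fact CARD('n) * B ^ CARD('n)"
proof -
  have B0: "0 \<le> B" using assms[of undefined undefined] by linarith
  have "\<bar>det A\<bar> \<le> (\<Sum>p | p permutes (UNIV::'n set). \<bar>of_int (sign p) * (\<Prod>i\<in>UNIV. A $ i $ p i)\<bar>)"
    unfolding det_def by (rule sum_abs)
  also have "\<dots> \<le> (\<Sum>p | p permutes (UNIV::'n set). B ^ CARD('n))"
  proof (rule sum_mono)
    fix p :: "'n \<Rightarrow> 'n"
    have "\<bar>of_int (sign p) * (\<Prod>i\<in>UNIV. A $ i $ p i)\<bar> = (\<Prod>i\<in>UNIV. \<bar>A $ i $ p i\<bar>)"
      by (simp add: abs_mult sign_abs abs_prod)
    also have "\<dots> \<le> (\<Prod>i\<in>(UNIV::'n set). B)"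
      by (rule prod_mono) (simp add: assms)
    finally show "\<bar>of_int (sign p) * (\<Prod>i\<in>UNIV. A $ i $ p i)\<bar> \<le> B ^ CARD('n)" by simp
  qed
  also have "\<dots> = fact CARD('n) * B ^ CARD('n)"
    by (simp add: card_permutations)
  finally show ?thesis .
qed

lemma det_matpow: "det (matpow A n) = det A ^ n"
  by (induction n) (simp_all add: det_mul)

lemma matpow_mulv_Suc: "matpow A (Suc n) *v x = A *v (matpow A n *v x)"
  by (simp add: matrix_vector_mul_assoc)

lemma mulv_axis: "(M *v (r *\<^sub>R axis j 1)) $ i = r * M $ i $ j"
  by (simp add: matrix_vector_mult_def axis_def mult_ifz)

lemma invariant_det_le1:
  fixes G :: "real^'n^'n" and P :: "real^'n \<Rightarrow> real"
  assumes inv: "\<And>x. P (G *v x) = P x" and r: "r > 0" "\<And>x. norm x \<le> r \<Longrightarrow> P x \<le> 1"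
    and B: "\<And>x. P x \<le> 1 \<Longrightarrow> norm x \<le> B"
  shows "\<bar>det G\<bar> \<le> 1"
proof (rule ccontr)
  assume "\<not> \<bar>det G\<bar> \<le> 1"
  then have g1: "1 < \<bar>det G\<bar>" by simp
  have Pn: "P (matpow G n *v x) = P x" for n x
    by (induction n) (simp_all add: matrix_vector_mul_assoc[symmetric] inv)
  have ent: "\<bar>matpow G n $ i $ j\<bar> \<le> B / r" for n i j
  proof -
    let ?y = "r *\<^sub>R axis j (1::real)"
    have "norm ?y = r" using r by (simp add: norm_axis_1)
    then have "P ?y \<le> 1" using r by simp
    then have "P (matpow G n *v ?y) \<le> 1" by (simp add: Pn)
    then have "norm (matpow G n *v ?y) \<le> B" by (rule B)
    moreover have "\<bar>(matpow G n *v ?y) $ i\<bar> \<le> norm (matpow G n *v ?y)" by (rule component_le_norm_cart)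
    ultimately have "\<bar>r * matpow G n $ i $ j\<bar> \<le> B" by (simp add: mulv_axis)
    then show ?thesis using r by (simp add: abs_mult field_simps)
  qed
  obtain n where n: "fact CARD('n) * (B / r) ^ CARD('n) < \<bar>det G\<bar> ^ n"
    using real_arch_pow[OF g1] by blast
  have "\<bar>det G\<bar> ^ n = \<bar>det (matpow G n)\<bar>" by (simp add: det_matpow power_abs)
  also have "\<dots> \<le> fact CARD('n) * (B / r) ^ CARD('n)" by (rule det_bound) (rule ent)
  finally show False using n by simp
qed

section \<open>Uniqueness of the trace of exponents\<close>

lemma matpow_scaleR: "matpow (s *\<^sub>R A) k = (s ^ k) *\<^sub>R matpow A k"
  by (induction k) (simp_all add: scalar_matrix_assoc matrix_scalar_ac mult.commute)

lemma matpow_entry_bound: fixes A :: "real^'n^'n"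
  shows "\<bar>matpow A k $ i $ j\<bar> \<le> mx (mat 1 :: real^'n^'n) * mx A ^ k"
  using entry_le_mx mx_matpow order_trans by blast

lemma mexp_scaleR_entry:
  fixes E :: "real^'n^'n"
  shows "mexp (s *\<^sub>R E) $ i $ j = (\<Sum>k. (matpow E k $ i $ j / fact k) * s ^ k)"
  by (simp add: mexp_nth matpow_scaleR mult.commute mult.left_commute)

lemma mexp_entry_deriv:
  fixes E :: "real^'n^'n"
  shows "((\<lambda>s. mexp (s *\<^sub>R E) $ i $ j) has_real_derivative E $ i $ j) (at 0)"
proof -
  define c where "c k = matpow E k $ i $ j / fact k" for k
  define K where "K = mx (mat 1 :: real^'n^'n)"
  define M where "M = mx E"
  have K0: "0 \<le> K" and M0: "0 \<le> M" by (simp_all add: K_def M_def mx_nonneg)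
  have cb: "\<bar>c k\<bar> \<le> K * M ^ k / fact k" for k
    unfolding c_def K_def M_def using matpow_entry_bound[of E k i j]
    by (simp add: divide_right_mono)
  have summ: "summable (\<lambda>k. c k * s ^ k)" for s
  proof (rule summable_comparison_test)
    show "summable (\<lambda>k. K * (inverse (fact k) * (M * \<bar>s\<bar>) ^ k))"
      by (rule summable_mult, rule summable_exp)
    show "\<exists>N. \<forall>k\<ge>N. norm (c k * s ^ k) \<le> K * (inverse (fact k) * (M * \<bar>s\<bar>) ^ k)"
    proof (intro exI allI impI)
      fix k :: nat
      have "norm (c k * s ^ k) = \<bar>c k\<bar> * \<bar>s\<bar> ^ k" by (simp add: abs_mult power_abs)
      also have "\<dots> \<le> K * M ^ k / fact k * \<bar>s\<bar> ^ k"
        by (rule mult_right_mono[OF cb]) simp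
      finally show "norm (c k * s ^ k) \<le> K * (inverse (fact k) * (M * \<bar>s\<bar>) ^ k)"
        by (simp add: field_simps power_mult_distrib)
    qed
  qed
  have eq: "mexp (s *\<^sub>R E) $ i $ j = c 0 + (\<Sum>n. c (Suc n) * s ^ Suc n)" for s
    using suminf_split_head[OF summ[of s]] by (simp add: mexp_scaleR_entry c_def[symmetric])
  have d: "((\<lambda>s. \<Sum>n. c (Suc n) * s ^ Suc n) has_real_derivative (\<Sum>n. c (Suc n) * real (Suc n) * 0 ^ n)) (at 0)"
  proof (rule DERIV_power_series'[where R=1])
    fix x :: real assume "x \<in> {-1<..<1}"
    show "summable (\<lambda>n. c (Suc n) * real (Suc n) * x ^ n)"
    proof (rule summable_comparison_test)
      show "summable (\<lambda>n. (K * M) * (inverse (fact n) * (M * \<bar>x\<bar>) ^ n))"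
        by (rule summable_mult, rule summable_exp)
      show "\<exists>N. \<forall>n\<ge>N. norm (c (Suc n) * real (Suc n) * x ^ n) \<le> (K * M) * (inverse (fact n) * (M * \<bar>x\<bar>) ^ n)"
      proof (intro exI allI impI)
        fix n :: nat
        have cs: "c (Suc n) * real (Suc n) = matpow E (Suc n) $ i $ j / fact n"
          unfolding c_def by (simp add: fact_Suc del: of_nat_Suc)
        have "norm (c (Suc n) * real (Suc n) * x ^ n) = \<bar>c (Suc n) * real (Suc n)\<bar> * \<bar>x\<bar> ^ n"
          by (simp only: real_norm_def abs_mult power_abs)
        also have "\<dots> = \<bar>matpow E (Suc n) $ i $ j\<bar> / fact n * \<bar>x\<bar> ^ n"
          by (subst cs) simp
        also have "\<dots> \<le> K * M ^ Suc n / fact n * \<bar>x\<bar> ^ n"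
          by (intro mult_right_mono divide_right_mono) (use matpow_entry_bound[of E "Suc n" i j] in \<open>simp_all add: K_def M_def\<close>)
        also have "\<dots> = (K * M) * (inverse (fact n) * (M * \<bar>x\<bar>) ^ n)"
          by (simp add: field_simps power_mult_distrib)
        finally show "norm (c (Suc n) * real (Suc n) * x ^ n) \<le> (K * M) * (inverse (fact n) * (M * \<bar>x\<bar>) ^ n)" .
      qed
    qed
  qed auto
  have v: "(\<Sum>n. c (Suc n) * real (Suc n) * 0 ^ n) = E $ i $ j"
    using powser_zero[of "\<lambda>n. c (Suc n) * real (Suc n)"] by (simp add: c_def)
  have "((\<lambda>s. c 0 + (\<Sum>n. c (Suc n) * s ^ Suc n)) has_real_derivative E $ i $ j) (at 0)"
    using DERIV_add[OF DERIV_const d] v by simp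
  then show ?thesis by (simp add: eq)
qed

lemma mexp_zero: "mexp (0 :: real^'n^'n) = mat 1"
proof -
  have "mexp (diagm (\<lambda>_. 0::real)) = (mat 1 :: real^'n^'n)" by (simp add: mexp_diagm mat1_diagm)
  moreover have "diagm (\<lambda>_. 0::real) = (0::real^'n^'n)" by (simp add: vec_eq_iff)
  ultimately show ?thesis by simp
qed

lemma perm_nonid_prod_zero:
  assumes p: "p permutes (UNIV :: 'n::finite set)" and "p \<noteq> id"
  shows "(\<Prod>j\<in>UNIV - {i}. (if j = p j then (1::real) else 0)) = 0"
proof -
  obtain k where k: "p k \<noteq> k" using \<open>p \<noteq> id\<close> by (auto simp: fun_eq_iff)
  have "\<exists>j. j \<noteq> i \<and> p j \<noteq> j"
  proof (cases "k = i")
    case False then show ?thesis using k by blast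
  next
    case True
    have "p (p i) \<noteq> p i"
    proof
      assume "p (p i) = p i"
      then have "p i = i" using permutes_inj[OF p] by (auto dest: injD)
      then show False using k True by simp
    qed
    then show ?thesis using k True by metis
  qed
  then obtain j where "j \<noteq> i" "p j \<noteq> j" by blast
  then show ?thesis
    apply (intro prod_zero)
     apply simp
    apply (rule bexI[of _ j])
     apply auto
    done
qed

lemma det_mexp_deriv:
  fixes E :: "real^'n^'n"
  shows "((\<lambda>s. det (mexp (s *\<^sub>R E))) has_real_derivative trace E) (at 0)"
proof -
  define g where "g i j s = mexp (s *\<^sub>R E) $ i $ j" for i j s
  have g0: "g i j 0 = (if i = j then 1 else 0)" for i j
    by (simp add: g_def mexp_zero mat_def)
  have gd: "(g i j has_real_derivative E $ i $ j) (at 0)" for i j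
    unfolding g_def by (rule mexp_entry_deriv)
  have pd: "((\<lambda>s. \<Prod>i\<in>UNIV. g i (p i) s) has_real_derivative
      (\<Sum>i\<in>UNIV. E $ i $ p i * (\<Prod>j\<in>UNIV - {i}. g j (p j) 0))) (at 0)" for p :: "'n \<Rightarrow> 'n"
  proof -
    have "((\<lambda>s. \<Prod>i\<in>UNIV. g i (p i) s) has_derivative
        (\<lambda>y. \<Sum>i\<in>UNIV. (E $ i $ p i * y) * (\<Prod>j\<in>UNIV - {i}. g j (p j) 0))) (at 0)"
      using gd by (intro has_derivative_prod) (simp add: has_field_derivative_def)
    moreover have "(\<lambda>y. \<Sum>i\<in>UNIV. (E $ i $ p i * y) * (\<Prod>j\<in>UNIV - {i}. g j (p j) 0))
        = (*) (\<Sum>i\<in>UNIV. E $ i $ p i * (\<Prod>j\<in>UNIV - {i}. g j (p j) 0))"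
      by (auto simp: fun_eq_iff sum_distrib_left sum_distrib_right mult_ac)
    ultimately show ?thesis by (simp add: has_field_derivative_def)
  qed
  have dd: "((\<lambda>s. \<Sum>p | p permutes (UNIV::'n set). of_int (sign p) * (\<Prod>i\<in>UNIV. g i (p i) s))
      has_real_derivative (\<Sum>p | p permutes (UNIV::'n set). of_int (sign p) *
          (\<Sum>i\<in>UNIV. E $ i $ p i * (\<Prod>j\<in>UNIV - {i}. g j (p j) 0)))) (at 0)"
    by (rule DERIV_sum) (rule DERIV_cmult[OF pd])
  have val: "(\<Sum>p | p permutes (UNIV::'n set). of_int (sign p) *
          (\<Sum>i\<in>UNIV. E $ i $ p i * (\<Prod>j\<in>UNIV - {i}. g j (p j) 0))) = trace E"
  proof -
    have "(\<Sum>p | p permutes (UNIV::'n set). of_int (sign p) *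
          (\<Sum>i\<in>UNIV. E $ i $ p i * (\<Prod>j\<in>UNIV - {i}. g j (p j) 0)))
        = (\<Sum>p | p permutes (UNIV::'n set). if p = id then trace E else 0)"
    proof (rule sum.cong[OF refl])
      fix p assume "p \<in> {p. p permutes (UNIV::'n set)}"
      then have p: "p permutes (UNIV::'n set)" by simp
      show "of_int (sign p) * (\<Sum>i\<in>UNIV. E $ i $ p i * (\<Prod>j\<in>UNIV - {i}. g j (p j) 0))
          = (if p = id then trace E else 0)"
      proof (cases "p = id")
        case True
        then show ?thesis by (simp add: sign_id g0 trace_def)
      next
        case False
        have z: "(\<Prod>j\<in>UNIV - {i}. g j (p j) 0) = 0" for i
          using perm_nonid_prod_zero[OF p False, of i] by (simp add: g0)
        have "(\<Sum>i\<in>UNIV. E $ i $ p i * (\<Prod>j\<in>UNIV - {i}. g j (p j) 0)) = 0"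
        proof (intro sum.neutral ballI)
          fix i show "E $ i $ p i * (\<Prod>j\<in>UNIV - {i}. g j (p j) 0) = 0"
            by (simp only: z mult_zero_right)
        qed
        then show ?thesis using False by simp
      qed
    qed
    also have "\<dots> = trace E"
      by (simp add: permutes_id)
    finally show ?thesis .
  qed
  have "det (mexp (s *\<^sub>R E)) = (\<Sum>p | p permutes (UNIV::'n set). of_int (sign p) * (\<Prod>i\<in>UNIV. g i (p i) s))" for s
    by (simp add: det_def g_def)
  then show ?thesis using dd val by simp
qed

lemma trace_unique:
  fixes P :: "real^'n \<Rightarrow> real" and a :: "'n \<Rightarrow> real" and E :: "real^'n^'n"
  assumes P0: "\<And>x. P x = 0 \<Longrightarrow> x = 0"
    and r: "r > 0" "\<And>x. norm x \<le> r \<Longrightarrow> P x \<le> 1"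
    and B: "\<And>x. P x \<le> 1 \<Longrightarrow> norm x \<le> B"
    and hd: "homogeneous_wrt (diagm a) P" and hE: "homogeneous_wrt E P"
  shows "trace E = sum a UNIV"
proof -
  have hE': "P (tpow t E *v x) = t * P x" if "t > 0" for t x
    using hE that by (simp add: homogeneous_wrt_def)
  have hd': "P (diagm (\<lambda>i. t powr a i) *v x) = t * P x" if "t > 0" for t x
    using hd that by (simp add: homogeneous_wrt_def tpow_diagm)
  have Pz: "P 0 = 0" using hE'[of 2 0] by simp
  have detA: "\<bar>det (tpow t E)\<bar> = t powr (sum a UNIV)" if t: "t > 0" for t
  proof -
    define A where "A = tpow t E"
    define D where "D = diagm (\<lambda>i. t powr a i)"
    define Di where "Di = diagm (\<lambda>i. t powr (- a i))"
    have hA: "P (A *v x) = t * P x" for x using hE'[OF t] by (simp add: A_def)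
    have hD: "P (D *v x) = t * P x" for x using hd'[OF t] by (simp add: D_def)
    have DDi: "D ** Di = mat 1" "Di ** D = mat 1"
      using t by (simp_all add: D_def Di_def diagm_mult mat1_diagm powr_add[symmetric])
    have injA: "inj ((*v) A)"
    proof (rule injI)
      fix x y assume "A *v x = A *v y"
      then have "A *v (x - y) = 0" by (simp add: matrix_vector_mult_diff_distrib)
      then have "t * P (x - y) = 0" using hA[of "x - y"] Pz by simp
      then have "P (x - y) = 0" using t by simp
      then have "x - y = 0" by (rule P0)
      then show "x = y" by simp
    qed
    have "det A \<noteq> 0"
      using det_nz_iff_inj[of "(*v) A"] injA by (simp add: matrix_of_matrix_vector_mul)
    then obtain Ai where Ai: "A ** Ai = mat 1" "Ai ** A = mat 1"
      using invertible_det_nz invertible_def by blast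
    define G where "G = Di ** A"
    define H where "H = Ai ** D"
    have PG: "P (G *v x) = P x" for x
    proof -
      have "t * P (G *v x) = P (D *v (G *v x))" by (simp add: hD)
      also have "\<dots> = P (A *v x)"
        by (simp add: G_def matrix_vector_mul_assoc matrix_mul_assoc DDi)
      also have "\<dots> = t * P x" by (rule hA)
      finally show ?thesis using t by simp
    qed
    have PH: "P (H *v x) = P x" for x
    proof -
      have "t * P (H *v x) = P (A *v (H *v x))" by (simp add: hA)
      also have "\<dots> = P (D *v x)"
        by (simp add: H_def matrix_vector_mul_assoc matrix_mul_assoc Ai)
      also have "\<dots> = t * P x" by (rule hD)
      finally show ?thesis using t by simp
    qed
    have g1: "\<bar>det G\<bar> \<le> 1" by (rule invariant_det_le1[where P=P and r=r and B=B, OF PG r B])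
    have h1: "\<bar>det H\<bar> \<le> 1" by (rule invariant_det_le1[where P=P and r=r and B=B, OF PH r B])
    have "det G * det H = (det Di * det D) * (det A * det Ai)"
      by (simp add: G_def H_def det_mul)
    also have "\<dots> = 1"
      by (simp add: det_mul[symmetric] DDi Ai)
    finally have GH: "\<bar>det G\<bar> * \<bar>det H\<bar> = 1" by (simp add: abs_mult[symmetric])
    have "\<bar>det G\<bar> = 1"
    proof (rule ccontr)
      assume "\<bar>det G\<bar> \<noteq> 1"
      then have "\<bar>det G\<bar> < 1" using g1 by simp
      then have "\<bar>det G\<bar> * \<bar>det H\<bar> < 1"
        using h1 by (smt (verit) abs_ge_zero mult_le_one mult_right_le_one_le)
      then show False using GH by simp
    qed
    moreover have "det A = det D * det G"
      by (simp add: G_def det_mul[symmetric] matrix_mul_assoc DDi)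
    ultimately have "\<bar>det A\<bar> = \<bar>det D\<bar>" by (simp add: abs_mult)
    also have "\<dots> = t powr (sum a UNIV)"
      using t by (simp add: D_def det_diagm powr_sum prod_nonneg abs_prod)
    finally show ?thesis by (simp add: A_def)
  qed
  define c where "c = sum a UNIV"
  have fe: "\<bar>det (mexp (s *\<^sub>R E))\<bar> = exp (c * s)" for s
  proof -
    have "tpow (exp s) E = mexp (s *\<^sub>R E)" by (simp add: tpow_def)
    then show ?thesis using detA[of "exp s"] by (simp add: c_def powr_def mult.commute)
  qed
  have fd: "((\<lambda>s. det (mexp (s *\<^sub>R E))) has_real_derivative trace E) (at 0)"
    by (rule det_mexp_deriv)
  have "isCont (\<lambda>s. det (mexp (s *\<^sub>R E))) 0" by (rule DERIV_isCont[OF fd])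
  moreover have "det (mexp ((0::real) *\<^sub>R E)) = 1" by (simp add: mexp_zero)
  ultimately have "\<forall>\<^sub>F s in nhds 0. det (mexp (s *\<^sub>R E)) > 0"
    unfolding isCont_def by (metis (mono_tags) order_tendsto_iff zero_less_one tendsto_at_iff_tendsto_nhds)
  then have ev: "\<forall>\<^sub>F s in nhds 0. det (mexp (s *\<^sub>R E)) = exp (c * s)"
    by eventually_elim (metis fe abs_of_pos)
  have "((\<lambda>s. exp (c * s)) has_real_derivative trace E) (at 0)"
    using DERIV_cong_ev[OF refl ev refl] fd by simp
  moreover have "((\<lambda>s. exp (c * s)) has_real_derivative c) (at 0)"
    by (auto intro!: derivative_eq_intros)
  ultimately show ?thesis using DERIV_unique c_def by blast
qed

lemma xmon_scale:
  assumes t: "t > 0"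
  shows "xmon (\<chi> i. t powr a i * \<xi> $ i) \<beta> = t powr (\<Sum>j\<in>UNIV. real (\<beta> j) * a j) * xmon \<xi> \<beta>"
proof -
  have "xmon (\<chi> i. t powr a i * \<xi> $ i) \<beta> = (\<Prod>j\<in>UNIV. t powr (real (\<beta> j) * a j) * (\<xi> $ j) ^ \<beta> j)"
    unfolding xmon_def using t by (simp add: power_mult_distrib powr_power)
  also have "\<dots> = (\<Prod>j\<in>UNIV. t powr (real (\<beta> j) * a j)) * xmon \<xi> \<beta>"
    by (simp add: prod.distrib xmon_def)
  also have "\<dots> = t powr (\<Sum>j\<in>UNIV. real (\<beta> j) * a j) * xmon \<xi> \<beta>"
    using t by (simp add: powr_sum)
  finally show ?thesis .
qed

lemma finite_bounded_funs: "finite {\<beta> :: 'n::finite \<Rightarrow> nat. \<forall>j. \<beta> j \<le> N}"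
proof -
  have "{\<beta> :: 'n \<Rightarrow> nat. \<forall>j. \<beta> j \<le> N} = Pi\<^sub>E UNIV (\<lambda>_. {..N})"
    by (auto simp: PiE_UNIV_domain Pi_def)
  then show ?thesis by (simp add: finite_PiE)
qed

lemma continuous_xmon: "continuous_on UNIV (\<lambda>\<xi>. xmon \<xi> \<beta>)"
  unfolding xmon_def by (intro continuous_intros)

lemma continuous_poly: "continuous_on UNIV (\<lambda>\<xi>. \<Sum>\<beta>\<in>F. c \<beta> * xmon \<xi> \<beta>)"
  by (intro continuous_intros continuous_xmon)

lemma hom_poly:
  assumes "\<And>\<beta>. \<beta> \<in> F \<Longrightarrow> (\<Sum>j\<in>UNIV. real (\<beta> j) * a j) = 1"
  shows "homogeneous_wrt (diagm a) (\<lambda>\<xi>. \<Sum>\<beta>\<in>F. c \<beta> * xmon \<xi> \<beta>)"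
  unfolding homogeneous_wrt_def
proof (intro allI impI)
  fix t :: real and \<xi> :: "real^'a" assume t: "t > 0"
  have "(\<Sum>\<beta>\<in>F. c \<beta> * xmon (tpow t (diagm a) *v \<xi>) \<beta>) = (\<Sum>\<beta>\<in>F. t * (c \<beta> * xmon \<xi> \<beta>))"
    using t assms by (intro sum.cong) (simp_all add: tpow_diagm_mulv xmon_scale)
  then show "(\<Sum>\<beta>\<in>F. c \<beta> * xmon (tpow t (diagm a) *v \<xi>) \<beta>) = t *\<^sub>R (\<Sum>\<beta>\<in>F. c \<beta> * xmon \<xi> \<beta>)"
    by (simp add: sum_distrib_left)
qed

lemma hom_abs:
  fixes P :: "real^'n \<Rightarrow> real"
  assumes "homogeneous_wrt E P"
  shows "homogeneous_wrt E (\<lambda>\<xi>. \<bar>P \<xi>\<bar>)"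
  using assms by (auto simp: homogeneous_wrt_def abs_mult)

lemma powr_inv_powr: "(y::real) \<ge> 0 \<Longrightarrow> a > 0 \<Longrightarrow> (y powr (1 / a)) powr a = y"
  by (simp add: powr_powr)

lemma pos_lower_bound:
  fixes P :: "real^'n \<Rightarrow> real"
  assumes cont: "continuous_on UNIV P" and nn: "\<And>\<xi>. P \<xi> \<ge> 0" and z: "\<And>\<xi>. P \<xi> = 0 \<longleftrightarrow> \<xi> = 0"
    and hd: "homogeneous_wrt (diagm a) P" and apos: "\<And>j. a j > 0"
  shows "\<exists>c>0. \<forall>\<xi> j. c * \<bar>\<xi> $ j\<bar> powr (1 / a j) \<le> P \<xi>"
proof -
  define K1 where "K1 = {\<eta>::real^'n. (\<forall>j. \<bar>\<eta> $ j\<bar> \<le> 1) \<and> (\<exists>j. \<bar>\<eta> $ j\<bar> = 1)}"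
  have K1eq: "K1 = {\<eta>. \<forall>j. \<bar>\<eta> $ j\<bar> \<le> 1} \<inter> (\<Union>j. {\<eta>. \<bar>\<eta> $ j\<bar> = 1})"
    by (auto simp: K1_def)
  have cl1: "closed {\<eta>::real^'n. \<forall>j. \<bar>\<eta> $ j\<bar> \<le> 1}"
  proof -
    have "{\<eta>::real^'n. \<forall>j. \<bar>\<eta> $ j\<bar> \<le> 1} = (\<Inter>j. {\<eta>. \<bar>\<eta> $ j\<bar> \<le> 1})" by auto
    moreover have "closed {\<eta>::real^'n. \<bar>\<eta> $ j\<bar> \<le> 1}" for j
      by (intro closed_Collect_le continuous_intros)
    ultimately show ?thesis by auto
  qed
  have cl2: "closed (\<Union>j. {\<eta>::real^'n. \<bar>\<eta> $ j\<bar> = 1})"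
    by (intro closed_Union) (auto intro!: closed_Collect_eq continuous_intros)
  have bd: "bounded {\<eta>::real^'n. \<forall>j. \<bar>\<eta> $ j\<bar> \<le> 1}"
  proof -
    have "norm \<eta> \<le> real CARD('n)" if "\<forall>j. \<bar>\<eta> $ j\<bar> \<le> 1" for \<eta> :: "real^'n"
    proof -
      have "norm \<eta> \<le> (\<Sum>j\<in>UNIV. \<bar>\<eta> $ j\<bar>)" by (rule norm_le_l1_cart)
      also have "\<dots> \<le> (\<Sum>j\<in>(UNIV::'n set). 1)" using that by (intro sum_mono) auto
      finally show ?thesis by simp
    qed
    then show ?thesis unfolding bounded_iff by blast
  qed
  have cK1: "compact K1" unfolding K1eq
    using cl1 cl2 bd by (simp add: compact_eq_bounded_closed bounded_Int closed_Int)
  have "(\<chi> j. (1::real)) \<in> K1" by (auto simp: K1_def)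
  then have neK1: "K1 \<noteq> {}" by auto
  obtain x0 where x0: "x0 \<in> K1" "\<And>y. y \<in> K1 \<Longrightarrow> P x0 \<le> P y"
    using continuous_attains_inf[OF cK1 neK1 continuous_on_subset[OF cont]] by blast
  have "x0 \<noteq> 0" using x0(1) by (auto simp: K1_def)
  then have c0: "P x0 > 0" using nn[of x0] z[of x0] by linarith
  have hd': "P (\<chi> i. t powr a i * \<xi> $ i) = t * P \<xi>" if "t > 0" for t \<xi>
    using hd that by (simp add: homogeneous_wrt_def tpow_diagm_mulv)
  show ?thesis
  proof (intro exI[of _ "P x0"] conjI allI c0)
    fix \<xi> :: "real^'n" and j
    show "P x0 * \<bar>\<xi> $ j\<bar> powr (1 / a j) \<le> P \<xi>"
    proof (cases "\<xi> = 0")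
      case True
      then show ?thesis using z[of 0] by simp
    next
      case False
      define f where "f i = \<bar>\<xi> $ i\<bar> powr (1 / a i)" for i
      define s where "s = Max (range f)"
      have fs: "f i \<le> s" for i unfolding s_def by (rule Max_ge) auto
      have "s \<in> range f" unfolding s_def by (rule Max_in) auto
      then obtain j0 where j0: "f j0 = s" by auto
      obtain i1 where "\<xi> $ i1 \<noteq> 0" using False by (auto simp: vec_eq_iff)
      then have "f i1 > 0" by (simp add: f_def)
      then have s0: "s > 0" using fs[of i1] by linarith
      define \<eta> where "\<eta> = (\<chi> i. s powr (- a i) * \<xi> $ i)"
      have le: "\<bar>\<xi> $ i\<bar> \<le> s powr a i" for i
      proof -
        have "\<bar>\<xi> $ i\<bar> = f i powr a i" using apos[of i] by (simp add: f_def powr_powr)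
        also have "\<dots> \<le> s powr a i" using fs[of i] apos[of i]
          by (intro powr_mono2) (auto simp: f_def)
        finally show ?thesis .
      qed
      have eta_abs: "\<bar>\<eta> $ i\<bar> = \<bar>\<xi> $ i\<bar> / s powr a i" for i
        using s0 by (simp add: \<eta>_def abs_mult powr_minus divide_inverse mult.commute)
      have "\<eta> \<in> K1"
      proof -
        have "\<bar>\<eta> $ i\<bar> \<le> 1" for i using le[of i] s0 by (simp add: eta_abs divide_le_eq_1)
        moreover have "\<bar>\<xi> $ j0\<bar> = s powr a j0"
          using j0 apos[of j0] by (metis abs_ge_zero f_def powr_inv_powr)
        then have "\<bar>\<eta> $ j0\<bar> = 1" using s0 by (simp add: eta_abs)
        ultimately show ?thesis by (auto simp: K1_def)
      qed
      then have pe: "P x0 \<le> P \<eta>" by (rule x0(2))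
      have "(\<chi> i. s powr a i * \<eta> $ i) = \<xi>"
        using s0 by (simp add: \<eta>_def vec_eq_iff powr_minus)
      then have "P \<xi> = s * P \<eta>" using hd'[OF s0, of \<eta>] by simp
      moreover have "P x0 * f j \<le> P x0 * s" using fs[of j] c0 by simp
      moreover have "P x0 * s \<le> P \<eta> * s" using pe s0 by simp
      ultimately show ?thesis by (simp add: f_def mult.commute)
    qed
  qed
qed

lemma pos_hom_from_diag:
  fixes P :: "real^'n \<Rightarrow> real"
  assumes cont: "continuous_on UNIV P" and nn: "\<And>\<xi>. P \<xi> \<ge> 0" and z: "\<And>\<xi>. P \<xi> = 0 \<longleftrightarrow> \<xi> = 0"
    and hd: "homogeneous_wrt (diagm a) P" and apos: "\<And>j. a j > 0"
  shows "pos_homogeneous P" "hom_order P = sum a UNIV"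
proof -
  obtain c where c: "c > 0" "\<And>\<xi> j. c * \<bar>\<xi> $ j\<bar> powr (1 / a j) \<le> P \<xi>"
    using pos_lower_bound[OF assms] by blast
  define B where "B = (\<Sum>j\<in>(UNIV::'n set). (1 / c) powr a j)"
  have bnd: "norm \<xi> \<le> B" if "P \<xi> \<le> 1" for \<xi>
  proof -
    have "\<bar>\<xi> $ j\<bar> \<le> (1 / c) powr a j" for j
    proof -
      have "\<bar>\<xi> $ j\<bar> powr (1 / a j) \<le> 1 / c"
        using c(2)[of \<xi> j] that c(1) by (simp add: field_simps)
      then have "(\<bar>\<xi> $ j\<bar> powr (1 / a j)) powr a j \<le> (1 / c) powr a j"
        using apos[of j] by (intro powr_mono2) auto
      then show ?thesis using apos[of j] by (simp add: powr_powr)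
    qed
    then have "(\<Sum>j\<in>UNIV. \<bar>\<xi> $ j\<bar>) \<le> B" unfolding B_def by (intro sum_mono) auto
    then show ?thesis using norm_le_l1_cart[of \<xi>] by linarith
  qed
  have P0: "P 0 = 0" using z by simp
  have "isCont P 0" using cont by (simp add: continuous_on_eq_continuous_at)
  then obtain \<delta> where \<delta>: "\<delta> > 0" "\<And>x. dist x 0 < \<delta> \<Longrightarrow> dist (P x) (P 0) < 1"
    unfolding continuous_at_eps_delta by (metis zero_less_one)
  have ball: "P x \<le> 1" if "norm x \<le> \<delta> / 2" for x
    using \<delta>(2)[of x] that \<delta>(1) P0 by (simp add: dist_norm)
  have cl: "closed {\<xi>. P \<xi> = 1}"
    using cont by (intro closed_Collect_eq) (auto simp: continuous_on_eq_continuous_at)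
  have "bounded {\<xi>. P \<xi> = 1}" unfolding bounded_iff using bnd by force
  then have comp: "compact {\<xi>. P \<xi> = 1}" using cl by (simp add: compact_eq_bounded_closed)
  have ex: "diagm a \<in> Exps P" using hd by (simp add: Exps_def)
  show "pos_homogeneous P" unfolding pos_homogeneous_def
    using cont nn z ex comp by auto
  have "trace E = sum a UNIV" if "E \<in> Exps P" for E
    using trace_unique[of P "\<delta>/2" B a E] z \<delta>(1) ball bnd hd that by (auto simp: Exps_def)
  then show "hom_order P = sum a UNIV" unfolding hom_order_def
    using ex by (metis someI)
qed

section \<open>Dominated convergence for infinite sums\<close>

lemma real_summable_dom:
  fixes f M :: "'i \<Rightarrow> real"
  assumes "M summable_on S" "\<And>b. b \<in> S \<Longrightarrow> \<bar>f b\<bar> \<le> M b"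
  shows "f summable_on S"
proof -
  have "(\<lambda>b. norm (f b)) summable_on S"
    by (rule summable_on_comparison_test[OF assms(1)]) (use assms(2) in auto)
  then show ?thesis by (rule abs_summable_summable)
qed

lemma infsum_abs_le:
  fixes f M :: "'i \<Rightarrow> real"
  assumes "M summable_on S" "\<And>b. b \<in> S \<Longrightarrow> \<bar>f b\<bar> \<le> M b"
  shows "\<bar>infsum f S\<bar> \<le> infsum M S"
proof -
  have fs: "f summable_on S" by (rule real_summable_dom[OF assms])
  have a: "(\<lambda>b. \<bar>f b\<bar>) summable_on S" by (rule real_summable_dom[OF assms(1)]) (use assms(2) in simp)
  have "\<bar>infsum f S\<bar> \<le> infsum (\<lambda>b. norm (f b)) S"
    using norm_infsum_bound[of f S] a by (simp add: summable_on_iff_abs_summable_on_real[symmetric])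
  also have "\<dots> \<le> infsum M S"
    by (rule infsum_mono) (use a assms in auto)
  finally show ?thesis .
qed

lemma infsum_split_finite:
  fixes f :: "'i \<Rightarrow> real"
  assumes "f summable_on S" "finite F0" "F0 \<subseteq> S"
  shows "infsum f S = sum f F0 + infsum f (S - F0)"
proof -
  have "S = F0 \<union> (S - F0)" using assms by auto
  then have "infsum f S = infsum f (F0 \<union> (S - F0))" by simp
  also have "\<dots> = infsum f F0 + infsum f (S - F0)"
    by (rule infsum_Un_disjoint) (use assms in \<open>auto intro: summable_on_subset_banach\<close>)
  finally show ?thesis using assms by simp
qed

lemma infsum_diff_real:
  fixes f g :: "'i \<Rightarrow> real"
  assumes "f summable_on S" "g summable_on S"
  shows "infsum (\<lambda>b. f b - g b) S = infsum f S - infsum g S"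
proof -
  have "infsum (\<lambda>b. f b + (- g b)) S = infsum f S + infsum (\<lambda>b. - g b) S"
    by (rule infsum_add) (use assms in \<open>auto simp: summable_on_uminus\<close>)
  then show ?thesis by (simp add: infsum_uminus)
qed

lemma infsum_tendsto_dom:
  fixes f :: "'x \<Rightarrow> 'i \<Rightarrow> real" and g M :: "'i \<Rightarrow> real"
  assumes lim: "\<And>b. b \<in> S \<Longrightarrow> ((\<lambda>x. f x b) \<longlongrightarrow> g b) F"
    and bound: "\<forall>\<^sub>F x in F. \<forall>b\<in>S. \<bar>f x b\<bar> \<le> M b"
    and gb: "\<And>b. b \<in> S \<Longrightarrow> \<bar>g b\<bar> \<le> M b"
    and Ms: "M summable_on S"
  shows "((\<lambda>x. infsum (f x) S) \<longlongrightarrow> infsum g S) F"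
proof (rule tendstoI)
  fix e :: real assume e: "e > 0"
  have M0: "M b \<ge> 0" if "b \<in> S" for b using gb[OF that] by linarith
  obtain F0 where F0: "finite F0" "F0 \<subseteq> S" "dist (sum M F0) (infsum M S) \<le> e / 4"
    using infsum_finite_approximation[OF Ms, of "e/4"] e by auto
  have tail: "infsum M (S - F0) \<le> e / 4"
    using infsum_split_finite[OF Ms F0(1,2)] F0(3) by (simp add: dist_real_def)
  have Ms': "M summable_on (S - F0)" using Ms by (rule summable_on_subset_banach) auto
  have "((\<lambda>x. \<Sum>b\<in>F0. f x b) \<longlongrightarrow> (\<Sum>b\<in>F0. g b)) F"
    using F0 lim by (intro tendsto_sum) auto
  then have ev1: "\<forall>\<^sub>F x in F. dist (\<Sum>b\<in>F0. f x b) (\<Sum>b\<in>F0. g b) < e / 4"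
    using e by (intro tendstoD) auto
  show "\<forall>\<^sub>F x in F. dist (infsum (f x) S) (infsum g S) < e"
    using ev1 bound
  proof eventually_elim
    case (elim x)
    have fs: "f x summable_on S" by (rule real_summable_dom[OF Ms]) (use elim in auto)
    have gs: "g summable_on S" by (rule real_summable_dom[OF Ms gb])
    have t1: "\<bar>infsum (f x) (S - F0)\<bar> \<le> infsum M (S - F0)"
      by (rule infsum_abs_le[OF Ms']) (use elim in auto)
    have t2: "\<bar>infsum g (S - F0)\<bar> \<le> infsum M (S - F0)"
      by (rule infsum_abs_le[OF Ms']) (use gb in auto)
    have "infsum (f x) S - infsum g S
        = ((\<Sum>b\<in>F0. f x b) - (\<Sum>b\<in>F0. g b)) + (infsum (f x) (S - F0) - infsum g (S - F0))"
      using infsum_split_finite[OF fs F0(1,2)] infsum_split_finite[OF gs F0(1,2)] by simp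
    then have "\<bar>infsum (f x) S - infsum g S\<bar> \<le> \<bar>(\<Sum>b\<in>F0. f x b) - (\<Sum>b\<in>F0. g b)\<bar>
        + \<bar>infsum (f x) (S - F0)\<bar> + \<bar>infsum g (S - F0)\<bar>" by linarith
    also have "\<dots> < e / 4 + e / 4 + e / 4" using elim(1) t1 t2 tail by (simp add: dist_real_def)
    finally show ?case using e by (simp add: dist_real_def)
  qed
qed

lemma infsum_continuous_on_dom:
  fixes f :: "'a::topological_space \<Rightarrow> 'i \<Rightarrow> real" and M :: "'i \<Rightarrow> real"
  assumes cont: "\<And>b. b \<in> S \<Longrightarrow> continuous_on T (\<lambda>x. f x b)"
    and bound: "\<And>x b. x \<in> T \<Longrightarrow> b \<in> S \<Longrightarrow> \<bar>f x b\<bar> \<le> M b"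
    and Ms: "M summable_on S"
  shows "continuous_on T (\<lambda>x. infsum (f x) S)"
  unfolding continuous_on_def
proof (intro ballI)
  fix x assume x: "x \<in> T"
  show "((\<lambda>x. infsum (f x) S) \<longlongrightarrow> infsum (f x) S) (at x within T)"
  proof (rule infsum_tendsto_dom[OF _ _ _ Ms])
    fix b assume "b \<in> S"
    then show "((\<lambda>y. f y b) \<longlongrightarrow> f x b) (at x within T)"
      using cont x by (simp add: continuous_on_def)
    show "\<bar>f x b\<bar> \<le> M b" using bound x \<open>b \<in> S\<close> by simp
  next
    show "\<forall>\<^sub>F y in at x within T. \<forall>b\<in>S. \<bar>f y b\<bar> \<le> M b"
      using bound by (auto simp: eventually_at_filter)
  qed
qed

lemma infsum_has_deriv:
  fixes f f' :: "'i \<Rightarrow> real \<Rightarrow> real" and M :: "'i \<Rightarrow> real"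
  assumes x: "a < x" "x < b"
    and der: "\<And>i s. i \<in> S \<Longrightarrow> a < s \<Longrightarrow> s < b \<Longrightarrow> (f i has_real_derivative f' i s) (at s)"
    and bd: "\<And>i s. i \<in> S \<Longrightarrow> a < s \<Longrightarrow> s < b \<Longrightarrow> \<bar>f' i s\<bar> \<le> M i"
    and Ms: "M summable_on S"
    and sm: "\<And>s. a < s \<Longrightarrow> s < b \<Longrightarrow> (\<lambda>i. f i s) summable_on S"
  shows "((\<lambda>s. infsum (\<lambda>i. f i s) S) has_real_derivative infsum (\<lambda>i. f' i x) S) (at x)"
proof -
  define q where "q y i = (f i y - f i x) / (y - x)" for y i
  have ev: "\<forall>\<^sub>F y in at x. a < y \<and> y < b \<and> y \<noteq> x"
  proof -
    have "\<forall>\<^sub>F y in nhds x. y \<in> {a<..<b}" using x by (intro eventually_nhds_in_open) auto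
    then show ?thesis unfolding eventually_at_filter by eventually_elim auto
  qed
  have qb: "\<forall>\<^sub>F y in at x. \<forall>i\<in>S. \<bar>q y i\<bar> \<le> M i"
    using ev
  proof eventually_elim
    case (elim y)
    show ?case
    proof
      fix i assume i: "i \<in> S"
      show "\<bar>q y i\<bar> \<le> M i"
      proof (cases "y < x")
        case True
        obtain z where z: "y < z" "z < x" "f i x - f i y = (x - y) * f' i z"
          using MVT2[OF True, of "f i" "f' i"] der[OF i] elim x by force
        then have "q y i = f' i z" using True by (simp add: q_def field_simps)
        then show ?thesis using bd[OF i, of z] elim z x by simp
      next
        case False
        then have yx: "x < y" using elim by simp
        obtain z where z: "x < z" "z < y" "f i y - f i x = (y - x) * f' i z"
          using MVT2[OF yx, of "f i" "f' i"] der[OF i] elim x by force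
        then have "q y i = f' i z" using yx by (simp add: q_def field_simps)
        then show ?thesis using bd[OF i, of z] elim z x by simp
      qed
    qed
  qed
  have ql: "((\<lambda>y. q y i) \<longlongrightarrow> f' i x) (at x)" if "i \<in> S" for i
    using der[OF that x] unfolding q_def has_field_derivative_iff by simp
  have fb: "\<bar>f' i x\<bar> \<le> M i" if "i \<in> S" for i using bd[OF that x] .
  have lim: "((\<lambda>y. infsum (q y) S) \<longlongrightarrow> infsum (\<lambda>i. f' i x) S) (at x)"
    by (rule infsum_tendsto_dom[OF ql qb fb Ms])
  have eq: "\<forall>\<^sub>F y in at x. infsum (q y) S
      = (infsum (\<lambda>i. f i y) S - infsum (\<lambda>i. f i x) S) / (y - x)"
    using ev
  proof eventually_elim
    case (elim y)
    have "infsum (q y) S = infsum (\<lambda>i. (f i y - f i x) * inverse (y - x)) S"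
      unfolding q_def divide_inverse by (rule refl)
    also have "\<dots> = infsum (\<lambda>i. f i y - f i x) S * inverse (y - x)"
      by (rule infsum_cmult_left')
    also have "\<dots> = (infsum (\<lambda>i. f i y) S - infsum (\<lambda>i. f i x) S) / (y - x)"
      using sm elim x by (simp add: infsum_diff_real divide_inverse)
    finally show ?case .
  qed
  show ?thesis unfolding has_field_derivative_iff
    using tendsto_cong[OF eq] lim by simp
qed

definition ord :: "('n::finite \<Rightarrow> nat) \<Rightarrow> nat" where
  "ord \<beta> = sum \<beta> UNIV"

primrec dsh :: "'n list \<Rightarrow> ('n \<Rightarrow> nat) \<Rightarrow> ('n \<Rightarrow> nat)" where
  "dsh [] \<beta> = \<beta>"
| "dsh (j # js) \<beta> = (dsh js \<beta>)(j := dsh js \<beta> j - 1)"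

primrec dmul :: "'n list \<Rightarrow> ('n \<Rightarrow> nat) \<Rightarrow> real" where
  "dmul [] \<beta> = 1"
| "dmul (j # js) \<beta> = dmul js \<beta> * real (dsh js \<beta> j)"

lemma abs_lem: "\<bar>a\<bar> - r < s \<Longrightarrow> s < r - \<bar>a\<bar> \<Longrightarrow> \<bar>a + s\<bar> < (r::real)"
  by arith

lemma axis_nth: "(x + s *\<^sub>R axis j 1) $ i = (if i = j then x $ i + s else x $ i)"
  by (simp add: axis_def)

lemma xmon_split: "xmon y \<gamma> = (y $ j) ^ \<gamma> j * (\<Prod>i\<in>UNIV - {j}. (y $ i) ^ \<gamma> i)"
  unfolding xmon_def by (subst prod.remove[of UNIV j]) auto

lemma xmon_axis_deriv:
  "((\<lambda>s. xmon (x + s *\<^sub>R axis j 1) \<gamma>) has_real_derivative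
     (real (\<gamma> j) * xmon (x + s *\<^sub>R axis j 1) (\<gamma>(j := \<gamma> j - 1)))) (at s)"
proof -
  define C where "C = (\<Prod>i\<in>UNIV - {j}. (x $ i) ^ \<gamma> i)"
  have e1: "xmon (x + s *\<^sub>R axis j 1) \<gamma> = (x $ j + s) ^ \<gamma> j * C" for s
  proof -
    have "(\<Prod>i\<in>UNIV - {j}. ((x + s *\<^sub>R axis j 1) $ i) ^ \<gamma> i) = C"
      unfolding C_def by (intro prod.cong) (auto simp: axis_def)
    then show ?thesis by (simp add: xmon_split[of _ _ j] axis_def)
  qed
  have e2: "xmon (x + s *\<^sub>R axis j 1) (\<gamma>(j := \<gamma> j - 1)) = (x $ j + s) ^ (\<gamma> j - 1) * C"
  proof -
    have "(\<Prod>i\<in>UNIV - {j}. ((x + s *\<^sub>R axis j 1) $ i) ^ (\<gamma>(j := \<gamma> j - 1)) i) = C"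
      unfolding C_def by (intro prod.cong) (auto simp: axis_def)
    then show ?thesis by (simp add: xmon_split[of _ _ j] axis_def)
  qed
  have "((\<lambda>s. (x $ j + s) ^ \<gamma> j * C) has_real_derivative
       (real (\<gamma> j) * ((x $ j + s) ^ (\<gamma> j - 1) * C))) (at s)"
    by (auto intro!: derivative_eq_intros)
  then show ?thesis unfolding e1 e2 .
qed

lemma sum_fun_upd: fixes \<gamma> :: "'n::finite \<Rightarrow> nat" shows "sum (\<gamma>(j := n)) UNIV + \<gamma> j = sum \<gamma> UNIV + (n::nat)"
proof -
  have a: "sum (\<gamma>(j := n)) UNIV = n + sum \<gamma> (UNIV - {j})"
    by (subst sum.remove[of UNIV j]) (auto intro!: sum.cong)
  have b: "sum \<gamma> UNIV = \<gamma> j + sum \<gamma> (UNIV - {j})"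
    by (subst sum.remove[of UNIV j]) auto
  show ?thesis using a b by simp
qed

lemma ord_dsh_le: "ord (dsh js \<beta>) \<le> ord \<beta>"
proof (induction js)
  case Nil then show ?case by simp
next
  case (Cons j js)
  have "ord (dsh (j # js) \<beta>) + dsh js \<beta> j = ord (dsh js \<beta>) + (dsh js \<beta> j - 1)"
    unfolding ord_def dsh.simps by (rule sum_fun_upd)
  then show ?case using Cons by linarith
qed

lemma ord_dsh: "dmul js \<beta> \<noteq> 0 \<Longrightarrow> ord (dsh js \<beta>) + length js = ord \<beta>"
proof (induction js)
  case Nil then show ?case by simp
next
  case (Cons j js)
  then have d: "dmul js \<beta> \<noteq> 0" and p: "dsh js \<beta> j \<noteq> 0" by auto
  have h: "ord (dsh (j # js) \<beta>) + dsh js \<beta> j = ord (dsh js \<beta>) + (dsh js \<beta> j - 1)"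
    unfolding ord_def dsh.simps by (rule sum_fun_upd)
  have i: "ord (dsh js \<beta>) + length js = ord \<beta>" by (rule Cons.IH[OF d])
  show ?case by (simp only: length_Cons) (use h i p in arith)
qed

lemma dsh_le_ord: "dsh js \<beta> j \<le> ord \<beta>"
proof -
  have "dsh js \<beta> j \<le> ord (dsh js \<beta>)" unfolding ord_def
    by (rule member_le_sum) auto
  then show ?thesis using ord_dsh_le order_trans by blast
qed

lemma dmul_bound: "0 \<le> dmul js \<beta> \<and> dmul js \<beta> \<le> real (ord \<beta>) ^ length js"
proof (induction js)
  case Nil then show ?case by simp
next
  case (Cons j js)
  have "dmul js \<beta> * real (dsh js \<beta> j) \<le> real (ord \<beta>) ^ length js * real (ord \<beta>)"
    using Cons dsh_le_ord[of js \<beta> j] by (intro mult_mono) auto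
  then show ?case using Cons by (simp add: mult.commute)
qed

lemma xmon_abs_le:
  assumes "\<And>j. \<bar>\<xi> $ j\<bar> \<le> v $ j"
  shows "\<bar>xmon \<xi> \<beta>\<bar> \<le> xmon v \<beta>"
  unfolding xmon_def abs_prod
  by (intro prod_mono) (use assms in \<open>auto intro: power_mono simp: power_abs\<close>)

lemma xmon_const: "xmon (\<chi> i. r) \<beta> = r ^ ord \<beta>"
  by (simp add: xmon_def ord_def power_sum)

lemma xmon_box: "(\<And>j. \<bar>\<xi> $ j\<bar> \<le> r) \<Longrightarrow> \<bar>xmon \<xi> \<beta>\<bar> \<le> r ^ ord \<beta>"
  using xmon_abs_le[of \<xi> "\<chi> i. r" \<beta>] by (simp add: xmon_const)

lemma poly_exp_bound: "\<exists>C. \<forall>n. real n ^ L \<le> C * 2 ^ n"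
proof (cases "L = 0")
  case True
  then show ?thesis by (intro exI[of _ 1]) simp
next
  case False
  define y where "y = (1/2::real) powr (1 / real L)"
  have y0: "0 < y" by (simp add: y_def)
  have "(1/2::real) powr (1 / real L) < 1 powr (1 / real L)"
    using False by (intro powr_less_mono2) auto
  then have y1: "y < 1" by (simp add: y_def)
  have "(\<lambda>n. real n * y ^ n) \<longlonglongrightarrow> 0"
    using powser_times_n_limit_0[of y] y0 y1 by simp
  then have "(\<lambda>n. (real n * y ^ n) ^ L) \<longlonglongrightarrow> 0"
    using tendsto_power[of _ 0 _ L] False by fastforce
  then have "Bseq (\<lambda>n. (real n * y ^ n) ^ L)" by (rule convergent_imp_Bseq[OF convergentI])
  then obtain C where C: "\<And>n. norm ((real n * y ^ n) ^ L) \<le> C" by (auto simp: Bseq_def)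
  have yL: "(y ^ n) ^ L = 1 / 2 ^ n" for n
  proof -
    have "(y ^ n) ^ L = (y ^ L) ^ n" by (simp add: power_mult[symmetric] mult.commute)
    also have "y ^ L = 1 / 2" using False
      by (simp add: y_def powr_realpow[symmetric] powr_powr)
    finally show ?thesis by (simp add: power_divide)
  qed
  show ?thesis
  proof (intro exI[of _ C] allI)
    fix n
    have "real n ^ L / 2 ^ n \<le> C" using C[of n] by (simp add: power_mult_distrib yL)
    then show "real n ^ L \<le> C * 2 ^ n" by (simp add: field_simps)
  qed
qed

context
  fixes c :: "('n::finite \<Rightarrow> nat) \<Rightarrow> real" and S :: "('n \<Rightarrow> nat) set" and \<delta> :: real
  assumes \<delta>0: "\<delta> > 0" and csum: "(\<lambda>\<beta>. \<bar>c \<beta>\<bar> * \<delta> ^ ord \<beta>) summable_on S"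
begin

definition "Tm js \<xi> \<beta> = c \<beta> * dmul js \<beta> * xmon \<xi> (dsh js \<beta>)"

lemma Tm_bound: "\<exists>K\<ge>0. \<forall>\<beta> \<xi>. (\<forall>j. \<bar>\<xi> $ j\<bar> \<le> \<delta> / 2) \<longrightarrow> \<bar>Tm js \<xi> \<beta>\<bar> \<le> K * (\<bar>c \<beta>\<bar> * \<delta> ^ ord \<beta>)"
proof -
  define L where "L = length js"
  obtain C where C: "\<And>n. real n ^ L \<le> C * 2 ^ n" using poly_exp_bound by blast
  have C0: "C \<ge> 0" using C[of 0] by (cases L) auto
  define K where "K = C / (\<delta> / 2) ^ L"
  have K0: "K \<ge> 0" using C0 \<delta>0 by (simp add: K_def)
  show ?thesis
  proof (intro exI[of _ K] conjI K0 allI impI)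
    fix \<beta> and \<xi> :: "real^'n" assume box: "\<forall>j. \<bar>\<xi> $ j\<bar> \<le> \<delta> / 2"
    show "\<bar>Tm js \<xi> \<beta>\<bar> \<le> K * (\<bar>c \<beta>\<bar> * \<delta> ^ ord \<beta>)"
    proof (cases "dmul js \<beta> = 0")
      case True
      then show ?thesis using K0 \<delta>0 by (simp add: Tm_def)
    next
      case False
      have o: "ord (dsh js \<beta>) + L = ord \<beta>" using ord_dsh[OF False] by (simp add: L_def)
      have x: "\<bar>xmon \<xi> (dsh js \<beta>)\<bar> \<le> (\<delta> / 2) ^ ord (dsh js \<beta>)"
        by (rule xmon_box) (use box in auto)
      have dm: "0 \<le> dmul js \<beta>" "dmul js \<beta> \<le> real (ord \<beta>) ^ L" using dmul_bound[of js \<beta>] by (auto simp: L_def)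
      have "\<bar>Tm js \<xi> \<beta>\<bar> = \<bar>c \<beta>\<bar> * dmul js \<beta> * \<bar>xmon \<xi> (dsh js \<beta>)\<bar>"
        using dm by (simp add: Tm_def abs_mult)
      also have "\<dots> \<le> \<bar>c \<beta>\<bar> * (real (ord \<beta>) ^ L) * (\<delta> / 2) ^ ord (dsh js \<beta>)"
        using dm x by (intro mult_mono) auto
      also have "\<dots> \<le> \<bar>c \<beta>\<bar> * (C * 2 ^ ord \<beta>) * (\<delta> / 2) ^ ord (dsh js \<beta>)"
        using \<delta>0 C0 by (intro mult_mono C) auto
      also have "\<dots> = K * (\<bar>c \<beta>\<bar> * \<delta> ^ ord \<beta>)"
      proof -
        have "(2::real) ^ ord \<beta> * (\<delta> / 2) ^ ord (dsh js \<beta>) * (\<delta> / 2) ^ L = \<delta> ^ ord \<beta>"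
        proof -
          have "(2::real) ^ ord \<beta> * (\<delta> / 2) ^ ord (dsh js \<beta>) * (\<delta> / 2) ^ L
              = 2 ^ ord \<beta> * (\<delta> / 2) ^ ord \<beta>" by (simp add: power_add[symmetric] o)
          also have "\<dots> = \<delta> ^ ord \<beta>" by (simp add: power_divide)
          finally show ?thesis .
        qed
        then show ?thesis using \<delta>0 unfolding K_def by (simp add: field_simps)
      qed
      finally show ?thesis .
    qed
  qed
qed

lemma Msum: "(\<lambda>\<beta>. K * (\<bar>c \<beta>\<bar> * \<delta> ^ ord \<beta>)) summable_on S"
  using csum by (rule summable_on_cmult_right)

definition "Bx = {\<xi>::real^'n. \<forall>j. \<bar>\<xi> $ j\<bar> < \<delta> / 2}"

lemma Bx_open: "open Bx"
proof -
  have "Bx = (\<Inter>j. {\<xi>::real^'n. \<bar>\<xi> $ j\<bar> < \<delta> / 2})" by (auto simp: Bx_def)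
  moreover have "open {\<xi>::real^'n. \<bar>\<xi> $ j\<bar> < \<delta> / 2}" for j
    by (intro open_Collect_less continuous_intros)
  ultimately show ?thesis by (auto intro: open_INT)
qed

lemma Bx_0: "0 \<in> Bx" using \<delta>0 by (simp add: Bx_def)

lemma Tm_deriv:
  assumes "\<xi> \<in> Bx"
  shows "((\<lambda>s. infsum (Tm js (\<xi> + s *\<^sub>R axis j 1)) S) has_real_derivative infsum (Tm (j # js) \<xi>) S) (at 0)"
proof -
  define \<eta> where "\<eta> = \<delta> / 2 - \<bar>\<xi> $ j\<bar>"
  have \<eta>0: "\<eta> > 0" using assms by (simp add: Bx_def \<eta>_def)
  have inbox: "\<bar>(\<xi> + s *\<^sub>R axis j 1) $ i\<bar> < \<delta> / 2" if "-\<eta> < s" "s < \<eta>" for s i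
    using assms that abs_lem[of "\<xi> $ j" "\<delta>/2" s] by (auto simp: axis_def Bx_def \<eta>_def)
  obtain K where K: "K \<ge> 0" "\<And>\<beta> \<xi>. (\<forall>j. \<bar>\<xi> $ j\<bar> \<le> \<delta> / 2) \<Longrightarrow> \<bar>Tm (j # js) \<xi> \<beta>\<bar> \<le> K * (\<bar>c \<beta>\<bar> * \<delta> ^ ord \<beta>)"
    using Tm_bound[of "j # js"] by blast
  obtain K0 where K0: "K0 \<ge> 0" "\<And>\<beta> \<xi>. (\<forall>j. \<bar>\<xi> $ j\<bar> \<le> \<delta> / 2) \<Longrightarrow> \<bar>Tm js \<xi> \<beta>\<bar> \<le> K0 * (\<bar>c \<beta>\<bar> * \<delta> ^ ord \<beta>)"
    using Tm_bound[of js] by blast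
  have "((\<lambda>s. infsum (\<lambda>\<beta>. Tm js (\<xi> + s *\<^sub>R axis j 1) \<beta>) S) has_real_derivative
      infsum (\<lambda>\<beta>. Tm (j # js) (\<xi> + 0 *\<^sub>R axis j 1) \<beta>) S) (at 0)"
  proof (rule infsum_has_deriv[where a="-\<eta>" and b=\<eta> and M="\<lambda>\<beta>. K * (\<bar>c \<beta>\<bar> * \<delta> ^ ord \<beta>)"])
    show "- \<eta> < 0" "0 < \<eta>" using \<eta>0 by auto
    show "(\<lambda>\<beta>. K * (\<bar>c \<beta>\<bar> * \<delta> ^ ord \<beta>)) summable_on S" by (rule Msum)
  next
    fix \<beta> s assume "\<beta> \<in> S" "-\<eta> < s" "s < \<eta>"
    have "((\<lambda>s. c \<beta> * dmul js \<beta> * xmon (\<xi> + s *\<^sub>R axis j 1) (dsh js \<beta>)) has_real_derivative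
        c \<beta> * dmul js \<beta> * (real (dsh js \<beta> j) * xmon (\<xi> + s *\<^sub>R axis j 1) ((dsh js \<beta>)(j := dsh js \<beta> j - 1)))) (at s)"
      by (intro DERIV_cmult xmon_axis_deriv)
    then show "((\<lambda>s. Tm js (\<xi> + s *\<^sub>R axis j 1) \<beta>) has_real_derivative Tm (j # js) (\<xi> + s *\<^sub>R axis j 1) \<beta>) (at s)"
      by (simp add: Tm_def mult_ac)
    show "\<bar>Tm (j # js) (\<xi> + s *\<^sub>R axis j 1) \<beta>\<bar> \<le> K * (\<bar>c \<beta>\<bar> * \<delta> ^ ord \<beta>)"
      using inbox[OF \<open>-\<eta> < s\<close> \<open>s < \<eta>\<close>] by (intro K(2)) (auto intro: less_imp_le)
  next
    fix s assume s: "-\<eta> < s" "s < \<eta>"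
    show "(\<lambda>\<beta>. Tm js (\<xi> + s *\<^sub>R axis j 1) \<beta>) summable_on S"
    proof (rule real_summable_dom[OF Msum[of K0]])
      fix b
      have "\<forall>i. \<bar>(\<xi> + s *\<^sub>R axis j 1) $ i\<bar> \<le> \<delta> / 2" using inbox[OF s] less_imp_le by blast
      then show "\<bar>Tm js (\<xi> + s *\<^sub>R axis j 1) b\<bar> \<le> K0 * (\<bar>c b\<bar> * \<delta> ^ ord b)" by (rule K0(2))
    qed
  qed
  then show ?thesis by simp
qed

lemma Tm_cont: "continuous_on Bx (\<lambda>\<xi>. infsum (Tm js \<xi>) S)"
proof -
  obtain K0 where K0: "K0 \<ge> 0" "\<And>\<beta> \<xi>. (\<forall>j. \<bar>\<xi> $ j\<bar> \<le> \<delta> / 2) \<Longrightarrow> \<bar>Tm js \<xi> \<beta>\<bar> \<le> K0 * (\<bar>c \<beta>\<bar> * \<delta> ^ ord \<beta>)"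
    using Tm_bound[of js] by blast
  show ?thesis
  proof (rule infsum_continuous_on_dom[OF _ _ Msum[of K0]])
    fix \<beta> show "continuous_on Bx (\<lambda>\<xi>. Tm js \<xi> \<beta>)"
      unfolding Tm_def by (intro continuous_intros continuous_on_subset[OF continuous_xmon]) auto
  next
    fix \<xi> \<beta> assume "\<xi> \<in> Bx"
    then show "\<bar>Tm js \<xi> \<beta>\<bar> \<le> K0 * (\<bar>c \<beta>\<bar> * \<delta> ^ ord \<beta>)"
      by (intro K0(2)) (auto simp: Bx_def intro: less_imp_le)
  qed
qed

lemma ipderiv_rep:
  assumes F: "\<And>\<xi>. F \<xi> = infsum (\<lambda>\<beta>. c \<beta> * xmon \<xi> \<beta>) S"
  shows "\<forall>\<xi>\<in>Bx. ipderiv js F \<xi> = infsum (Tm js \<xi>) S"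
proof (induction js)
  case Nil
  then show ?case by (simp add: Tm_def F)
next
  case (Cons j js)
  show ?case
  proof
    fix \<xi> assume \<xi>: "\<xi> \<in> Bx"
    define \<eta> where "\<eta> = \<delta> / 2 - \<bar>\<xi> $ j\<bar>"
    have \<eta>0: "\<eta> > 0" using \<xi> by (simp add: Bx_def \<eta>_def)
    have "\<forall>\<^sub>F s in nhds 0. s \<in> {-\<eta><..<\<eta>}" using \<eta>0 by (intro eventually_nhds_in_open) auto
    then have ev: "\<forall>\<^sub>F s in nhds 0. ipderiv js F (\<xi> + s *\<^sub>R axis j 1) = infsum (Tm js (\<xi> + s *\<^sub>R axis j 1)) S"
    proof eventually_elim
      case (elim s)
      have "\<xi> + s *\<^sub>R axis j 1 \<in> Bx" using \<xi> elim abs_lem[of "\<xi> $ j" "\<delta>/2" s] by (auto simp: Bx_def axis_def \<eta>_def)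
      then show ?case using Cons by blast
    qed
    have "((\<lambda>s. ipderiv js F (\<xi> + s *\<^sub>R axis j 1)) has_real_derivative infsum (Tm (j # js) \<xi>) S) (at 0)"
      using DERIV_cong_ev[OF refl ev refl] Tm_deriv[OF \<xi>] by simp
    then show "ipderiv (j # js) F \<xi> = infsum (Tm (j # js) \<xi>) S"
      by (simp add: pderiv_dir_def DERIV_imp_deriv)
  qed
qed

lemma ipderiv_differentiable:
  assumes F: "\<And>\<xi>. F \<xi> = infsum (\<lambda>\<beta>. c \<beta> * xmon \<xi> \<beta>) S" and \<xi>: "\<xi> \<in> Bx"
  shows "(\<lambda>s. ipderiv js F (\<xi> + s *\<^sub>R axis j 1)) differentiable (at 0)"
proof -
  define \<eta> where "\<eta> = \<delta> / 2 - \<bar>\<xi> $ j\<bar>"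
  have \<eta>0: "\<eta> > 0" using \<xi> by (simp add: Bx_def \<eta>_def)
  have "\<forall>\<^sub>F s in nhds 0. s \<in> {-\<eta><..<\<eta>}" using \<eta>0 by (intro eventually_nhds_in_open) auto
  then have ev: "\<forall>\<^sub>F s in nhds 0. ipderiv js F (\<xi> + s *\<^sub>R axis j 1) = infsum (Tm js (\<xi> + s *\<^sub>R axis j 1)) S"
  proof eventually_elim
    case (elim s)
    have "\<xi> + s *\<^sub>R axis j 1 \<in> Bx" using \<xi> elim abs_lem[of "\<xi> $ j" "\<delta>/2" s] by (auto simp: Bx_def axis_def \<eta>_def)
    then show ?case using ipderiv_rep[OF F] by blast
  qed
  have "((\<lambda>s. ipderiv js F (\<xi> + s *\<^sub>R axis j 1)) has_real_derivative infsum (Tm (j # js) \<xi>) S) (at 0)"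
    using DERIV_cong_ev[OF refl ev refl] Tm_deriv[OF \<xi>] by simp
  then show ?thesis using real_differentiable_def differentiableI by blast
qed

lemma smooth_series:
  assumes F: "\<And>\<xi>. F \<xi> = infsum (\<lambda>\<beta>. c \<beta> * xmon \<xi> \<beta>) S"
  shows "smooth_near0 F"
  unfolding smooth_near0_def
proof (intro exI[of _ Bx] conjI allI Bx_open Bx_0)
  fix l
  show "C_k_on l Bx F" unfolding C_k_on_def
  proof (intro conjI allI impI ballI)
    fix js :: "'n list" and j x assume "x \<in> Bx"
    then show "(\<lambda>s. ipderiv js F (x + s *\<^sub>R axis j 1)) differentiable (at 0)"
      by (rule ipderiv_differentiable[OF F])
  next
    fix js :: "'n list"
    show "continuous_on Bx (ipderiv js F)"
      using continuous_on_cong[OF refl, of Bx "ipderiv js F" "\<lambda>\<xi>. infsum (Tm js \<xi>) S"] Tm_cont[of js] ipderiv_rep[OF F, of js]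
      by blast
  qed
qed

end

lemma get_delta:
  fixes c :: "('n::finite \<Rightarrow> nat) \<Rightarrow> real"
  assumes U: "open U" "0 \<in> U" and sm: "\<And>\<xi>. \<xi> \<in> U \<Longrightarrow> (\<lambda>\<beta>. norm (c \<beta> * xmon \<xi> \<beta>)) summable_on S"
  shows "\<exists>\<delta>>0. (\<lambda>\<beta>. \<bar>c \<beta>\<bar> * \<delta> ^ ord \<beta>) summable_on S"
proof -
  obtain e where e: "e > 0" "ball 0 e \<subseteq> U" using U open_contains_ball by blast
  define \<delta> where "\<delta> = e / (2 * (real CARD('n) + 1))"
  have "2 * (real CARD('n) + 1) > 0" by simp
  then have \<delta>0: "\<delta> > 0" unfolding \<delta>_def by (intro divide_pos_pos) (use e in auto)
  define p where "p = (\<chi> i::'n. \<delta>)"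
  have "norm p \<le> (\<Sum>i\<in>UNIV. \<bar>p $ i\<bar>)" by (rule norm_le_l1_cart)
  also have "\<dots> = real CARD('n) * \<delta>" using \<delta>0 by (simp add: p_def)
  also have "\<dots> < e" using e by (simp add: \<delta>_def field_simps add_nonneg_pos)
  finally have "p \<in> U" using e by auto
  then have "(\<lambda>\<beta>. norm (c \<beta> * xmon p \<beta>)) summable_on S" by (rule sm)
  moreover have "norm (c \<beta> * xmon p \<beta>) = \<bar>c \<beta>\<bar> * \<delta> ^ ord \<beta>" for \<beta>
    using \<delta>0 by (simp add: p_def xmon_const abs_mult)
  ultimately show ?thesis using \<delta>0 by auto
qed

definition ffall :: "real \<Rightarrow> nat \<Rightarrow> real" where
  "ffall w k = (\<Prod>i<k. (w - real i))"

lemma ffall_0[simp]: "ffall w 0 = 1"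
  by (simp add: ffall_def)

lemma ffall_Suc: "ffall w (Suc k) = ffall w k * (w - real k)"
  by (simp add: ffall_def)

lemma ffall_bound: "w \<ge> 0 \<Longrightarrow> \<bar>ffall w k\<bar> \<le> (w + real k) ^ k"
proof -
  assume w: "w \<ge> 0"
  have "\<bar>ffall w k\<bar> = (\<Prod>i<k. \<bar>w - real i\<bar>)" by (simp add: ffall_def abs_prod)
  also have "\<dots> \<le> (\<Prod>i<k. (w + real k))"
    by (rule prod_mono) (use w in auto)
  finally show ?thesis by simp
qed

lemma polyb:
  assumes "A \<ge> 0" "B \<ge> 0"
  shows "\<exists>C. \<forall>n. (A * real n + B) ^ L \<le> C * 2 ^ n"
proof -
  obtain C where C: "\<And>n. real n ^ L \<le> C * 2 ^ n" using poly_exp_bound by blast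
  show ?thesis
  proof (intro exI[of _ "(A + B) ^ L * (2 * C)"] allI)
    fix n
    have "A * real n + B \<le> (A + B) * real (Suc n)" using assms by (simp add: algebra_simps)
    then have "(A * real n + B) ^ L \<le> ((A + B) * real (Suc n)) ^ L"
      using assms by (intro power_mono) auto
    also have "\<dots> = (A + B) ^ L * real (Suc n) ^ L" by (simp add: power_mult_distrib)
    also have "\<dots> \<le> (A + B) ^ L * (C * 2 ^ Suc n)"
      using assms by (intro mult_left_mono C) auto
    finally show "(A * real n + B) ^ L \<le> (A + B) ^ L * (2 * C) * 2 ^ n" by (simp add: mult_ac)
  qed
qed

lemma powr_tend0: "a > 0 \<Longrightarrow> ((\<lambda>t::real. t powr a) \<longlongrightarrow> 0) (at_right 0)"
  by (rule tendsto_zero_powrI[where f="\<lambda>t. t" and g="\<lambda>_. a" and b=a])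
     (auto simp: eventually_at_right_less intro: tendsto_ident_at eventually_mono[OF eventually_at_right_less])

lemma mx_diagm: "mx (diagm b) = (\<Sum>i\<in>UNIV. \<bar>b i\<bar>)"
proof -
  have "(\<Sum>j\<in>UNIV. \<bar>diagm b $ i $ j\<bar>) = \<bar>b i\<bar>" for i
  proof -
    have "(\<Sum>j\<in>UNIV. \<bar>diagm b $ i $ j\<bar>) = (\<Sum>j\<in>UNIV. if i = j then \<bar>b i\<bar> else 0)"
      by (rule sum.cong) auto
    then show ?thesis by simp
  qed
  then show ?thesis by (simp add: mx_def)
qed

lemma contracting_diag:
  assumes "\<And>i. a i > 0"
  shows "contracting (diagm a)"
  unfolding contracting_def
proof (rule tendsto_sandwich[of "\<lambda>_. 0" _ _ "\<lambda>t. \<Sum>i\<in>UNIV. t powr a i"])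
  show "\<forall>\<^sub>F t in at_right 0. 0 \<le> norm (tpow t (diagm a))" by simp
  show "\<forall>\<^sub>F t in at_right 0. norm (tpow t (diagm a)) \<le> (\<Sum>i\<in>UNIV. t powr a i)"
    using eventually_at_right_less[of "0::real"]
  proof eventually_elim
    case (elim t)
    have "norm (tpow t (diagm a)) \<le> mx (tpow t (diagm a))" by (rule norm_le_mx)
    also have "\<dots> = (\<Sum>i\<in>UNIV. t powr a i)" using elim by (simp add: tpow_diagm mx_diagm)
    finally show ?case .
  qed
  show "((\<lambda>_. 0) \<longlongrightarrow> (0::real)) (at_right 0)" by simp
  have "((\<lambda>t. \<Sum>i\<in>UNIV. t powr a i) \<longlongrightarrow> (\<Sum>i\<in>(UNIV::'a set). 0)) (at_right 0)"
    by (intro tendsto_sum powr_tend0 assms)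
  then show "((\<lambda>t. \<Sum>i\<in>UNIV. t powr a i) \<longlongrightarrow> 0) (at_right 0)" by simp
qed

lemma ex_tau_all:
  fixes l :: nat and P :: "nat \<Rightarrow> real \<Rightarrow> bool"
  assumes "\<And>k. k \<le> l \<Longrightarrow> \<exists>\<tau>>0. \<forall>t. 0 < t \<and> t < \<tau> \<longrightarrow> P k t"
  shows "\<exists>\<tau>>0. \<forall>t. 0 < t \<and> t < \<tau> \<longrightarrow> (\<forall>k\<le>l. P k t)"
  using assms
proof (induction l)
  case 0
  then obtain \<tau> where "\<tau> > 0" "\<forall>t. 0 < t \<and> t < \<tau> \<longrightarrow> P 0 t" by blast
  then show ?case by auto
next
  case (Suc l)
  obtain \<tau>1 where t1: "\<tau>1 > 0" "\<forall>t. 0 < t \<and> t < \<tau>1 \<longrightarrow> (\<forall>k\<le>l. P k t)"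
    using Suc.IH Suc.prems by fastforce
  obtain \<tau>2 where t2: "\<tau>2 > 0" "\<forall>t. 0 < t \<and> t < \<tau>2 \<longrightarrow> P (Suc l) t"
    using Suc.prems by blast
  show ?case
  proof -
    have "min \<tau>1 \<tau>2 > 0" using t1 t2 by simp
    moreover have "\<forall>t. 0 < t \<and> t < min \<tau>1 \<tau>2 \<longrightarrow> (\<forall>k\<le>Suc l. P k t)"
    proof (intro allI impI)
      fix t k assume "0 < t \<and> t < min \<tau>1 \<tau>2" "k \<le> Suc l"
      then show "P k t" using t1 t2 le_Suc_eq[of k l] by auto
    qed
    ultimately show ?thesis by blast
  qed
qed

context
  fixes c :: "('n::finite \<Rightarrow> nat) \<Rightarrow> real" and S :: "('n \<Rightarrow> nat) set" and \<delta> :: real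
    and a :: "'n \<Rightarrow> real" and \<gamma> :: real
  assumes \<delta>0: "\<delta> > 0" and csum: "(\<lambda>\<beta>. \<bar>c \<beta>\<bar> * \<delta> ^ ord \<beta>) summable_on S"
    and apos: "\<And>i. a i > 0" and \<gamma>0: "\<gamma> > 0"
    and gap: "\<And>\<beta>. \<beta> \<in> S \<Longrightarrow> (\<Sum>j\<in>UNIV. real (\<beta> j) * a j) \<ge> 1 + \<gamma>"
begin

definition "wt \<beta> = (\<Sum>j\<in>UNIV. real (\<beta> j) * a j)"

lemma wt_nonneg: "wt \<beta> \<ge> 0"
  unfolding wt_def using apos by (intro sum_nonneg mult_nonneg_nonneg) (auto intro: less_imp_le)

lemma wt_le: "wt \<beta> \<le> (\<Sum>i\<in>UNIV. a i) * real (ord \<beta>)"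
proof -
  have "wt \<beta> \<le> (\<Sum>j\<in>UNIV. real (\<beta> j) * (\<Sum>i\<in>UNIV. a i))"
    unfolding wt_def
  proof (intro sum_mono mult_left_mono)
    fix j show "a j \<le> (\<Sum>i\<in>UNIV. a i)"
      using apos by (intro member_le_sum) (auto intro: less_imp_le)
  qed auto
  moreover have "(\<Sum>j\<in>UNIV. real (\<beta> j) * A) = A * real (ord \<beta>)" for A
    unfolding ord_def of_nat_sum sum_distrib_right[symmetric] by (simp add: mult.commute)
  ultimately show ?thesis by simp
qed

lemma ff_bound: "\<exists>C\<ge>0. \<forall>\<beta>. \<bar>ffall (wt \<beta>) k\<bar> * (\<delta> / 2) ^ ord \<beta> \<le> C * \<delta> ^ ord \<beta>"
proof -
  define A where "A = (\<Sum>i\<in>UNIV. a i)"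
  have A0: "A \<ge> 0" unfolding A_def using apos by (intro sum_nonneg) (auto intro: less_imp_le)
  obtain C where C: "\<And>n. (A * real n + real k) ^ k \<le> C * 2 ^ n"
    using polyb[OF A0, of "real k" k] by auto
  have "(A * real 0 + real k) ^ k \<le> C * 2 ^ 0" by (rule C)
  then have "real k ^ k \<le> C" by simp
  moreover have "0 \<le> real k ^ k" by simp
  ultimately have C0: "C \<ge> 0" by linarith
  show ?thesis
  proof (intro exI[of _ C] conjI allI C0)
    fix \<beta>
    have "\<bar>ffall (wt \<beta>) k\<bar> \<le> (wt \<beta> + real k) ^ k" by (rule ffall_bound[OF wt_nonneg])
    also have "\<dots> \<le> (A * real (ord \<beta>) + real k) ^ k"
      using wt_le[of \<beta>] wt_nonneg[of \<beta>] by (intro power_mono) (auto simp: A_def)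
    also have "\<dots> \<le> C * 2 ^ ord \<beta>" by (rule C)
    finally have "\<bar>ffall (wt \<beta>) k\<bar> * (\<delta> / 2) ^ ord \<beta> \<le> C * 2 ^ ord \<beta> * (\<delta> / 2) ^ ord \<beta>"
      using \<delta>0 by (intro mult_right_mono) auto
    also have "\<dots> = C * \<delta> ^ ord \<beta>" by (simp add: power_divide)
    finally show "\<bar>ffall (wt \<beta>) k\<bar> * (\<delta> / 2) ^ ord \<beta> \<le> C * \<delta> ^ ord \<beta>" .
  qed
qed

definition "Hk \<xi> k s = infsum (\<lambda>\<beta>. c \<beta> * ffall (wt \<beta>) k * s powr (wt \<beta> - real k) * xmon \<xi> \<beta>) S"

lemma xmon_v: "s > 0 \<Longrightarrow> xmon (\<chi> i. s powr a i * \<xi> $ i) \<beta> = s powr wt \<beta> * xmon \<xi> \<beta>"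
  unfolding wt_def by (rule xmon_scale)

lemma main_bound:
  assumes F: "\<And>\<xi>. F \<xi> = infsum (\<lambda>\<beta>. c \<beta> * xmon \<xi> \<beta>) S"
    and K: "compact K" and \<epsilon>: "\<epsilon> > 0"
  shows "\<exists>\<tau>>0. \<forall>t. 0 < t \<and> t < \<tau> \<longrightarrow>
     (\<forall>\<xi>\<in>K. \<bar>t ^ k * (deriv ^^ k) (\<lambda>s. F (tpow s (diagm a) *v \<xi>)) t\<bar> \<le> \<epsilon> * t)"
proof -
  define \<rho> where "\<rho> = \<delta> / 2"
  have \<rho>0: "\<rho> > 0" using \<delta>0 by (simp add: \<rho>_def)
  obtain R0 where R0: "\<And>x. x \<in> K \<Longrightarrow> norm x \<le> R0"
    using compact_imp_bounded[OF K] unfolding bounded_iff by blast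
  define R where "R = max R0 0"
  have R1: "R \<ge> 0" by (simp add: R_def)
  have R2: "\<bar>x $ i\<bar> \<le> R" if "x \<in> K" for x i
  proof -
    have "\<bar>x $ i\<bar> \<le> norm x" by (rule component_le_norm_cart)
    also have "\<dots> \<le> R0" by (rule R0[OF that])
    also have "R0 \<le> R" by (simp add: R_def)
    finally show ?thesis .
  qed
  note R = R1 R2
  define q where "q i = (\<rho> / (R + 1)) powr (1 / a i)" for i
  define \<tau>1 where "\<tau>1 = Min (range q)"
  have q0: "q i > 0" for i using \<rho>0 R by (simp add: q_def)
  have \<tau>1q: "\<tau>1 \<le> q i" for i unfolding \<tau>1_def by (rule Min_le) auto
  have \<tau>10: "\<tau>1 > 0" unfolding \<tau>1_def using q0 by (subst Min_gr_iff) auto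
  have spow: "s powr a i \<le> \<rho> / (R + 1)" if "0 < s" "s \<le> \<tau>1" for s i
  proof -
    have "s powr a i \<le> q i powr a i"
      using that \<tau>1q[of i] apos[of i] by (intro powr_mono2) auto
    also have "\<dots> = \<rho> / (R + 1)" using apos[of i] \<rho>0 R by (simp add: q_def powr_powr)
    finally show ?thesis .
  qed
  have box: "\<bar>s powr a i * \<xi> $ i\<bar> \<le> \<rho> * (R / (R + 1))" if "\<xi> \<in> K" "0 < s" "s \<le> \<tau>1" for \<xi> s i
  proof -
    have "\<bar>s powr a i * \<xi> $ i\<bar> = s powr a i * \<bar>\<xi> $ i\<bar>" using that by (simp add: abs_mult)
    also have "\<dots> \<le> (\<rho> / (R + 1)) * R"
      using spow[OF that(2,3), of i] R(2)[OF that(1), of i] R(1) \<rho>0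
      by (intro mult_mono) auto
    finally show ?thesis by simp
  qed
  have box': "\<bar>s powr a i * \<xi> $ i\<bar> \<le> \<rho>" if "\<xi> \<in> K" "0 < s" "s \<le> \<tau>1" for \<xi> s i
  proof -
    have "\<rho> * (R / (R + 1)) \<le> \<rho>" using \<rho>0 R by (simp add: field_simps)
    then show ?thesis using box[OF that, of i] by linarith
  qed
  have tb: "\<exists>C\<ge>0. \<forall>\<beta> \<xi> r. \<xi> \<in> K \<longrightarrow> 0 < a' \<longrightarrow> a' \<le> r \<longrightarrow> r \<le> \<tau>1 \<longrightarrow>
      \<bar>c \<beta> * ffall (wt \<beta>) k' * r powr (wt \<beta> - real k') * xmon \<xi> \<beta>\<bar> \<le> a' powr (- real k') * C * (\<bar>c \<beta>\<bar> * \<delta> ^ ord \<beta>)" for k' a'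
  proof -
    obtain C where C: "C \<ge> 0" "\<And>\<beta>. \<bar>ffall (wt \<beta>) k'\<bar> * (\<delta> / 2) ^ ord \<beta> \<le> C * \<delta> ^ ord \<beta>"
      using ff_bound[of k'] by blast
    show ?thesis
    proof (intro exI[of _ C] conjI allI impI C(1))
      fix \<beta> \<xi> r assume \<xi>: "\<xi> \<in> K" and a': "0 < a'" "a' \<le> r" "r \<le> \<tau>1"
      have r0: "r > 0" using a' by simp
      have e: "r powr (wt \<beta> - real k') * xmon \<xi> \<beta> = r powr (- real k') * xmon (\<chi> i. r powr a i * \<xi> $ i) \<beta>"
      proof -
        have e1: "r powr (wt \<beta> - real k') = r powr (- real k') * r powr wt \<beta>"
          using r0 by (simp add: powr_add[symmetric])
        show ?thesis by (simp only: e1 mult.assoc xmon_v[OF r0])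
      qed
      have xb: "\<bar>xmon (\<chi> i. r powr a i * \<xi> $ i) \<beta>\<bar> \<le> \<rho> ^ ord \<beta>"
        by (rule xmon_box) (use box'[OF \<xi> r0 a'(3)] in simp)
      have rp: "r powr (- real k') \<le> a' powr (- real k')"
        using a' by (intro powr_mono2') auto
      have "\<bar>c \<beta> * ffall (wt \<beta>) k' * r powr (wt \<beta> - real k') * xmon \<xi> \<beta>\<bar>
          = \<bar>c \<beta>\<bar> * \<bar>ffall (wt \<beta>) k'\<bar> * (r powr (- real k') * \<bar>xmon (\<chi> i. r powr a i * \<xi> $ i) \<beta>\<bar>)"
        by (simp only: mult.assoc e) (simp add: abs_mult)
      also have "\<dots> \<le> \<bar>c \<beta>\<bar> * \<bar>ffall (wt \<beta>) k'\<bar> * (a' powr (- real k') * \<rho> ^ ord \<beta>)"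
        using xb rp by (intro mult_left_mono mult_mono) auto
      also have "\<dots> = a' powr (- real k') * \<bar>c \<beta>\<bar> * (\<bar>ffall (wt \<beta>) k'\<bar> * (\<delta> / 2) ^ ord \<beta>)"
        by (simp add: \<rho>_def mult_ac)
      also have "\<dots> \<le> a' powr (- real k') * \<bar>c \<beta>\<bar> * (C * \<delta> ^ ord \<beta>)"
        by (intro mult_left_mono C(2)) auto
      finally show "\<bar>c \<beta> * ffall (wt \<beta>) k' * r powr (wt \<beta> - real k') * xmon \<xi> \<beta>\<bar>
          \<le> a' powr (- real k') * C * (\<bar>c \<beta>\<bar> * \<delta> ^ ord \<beta>)" by (simp add: mult_ac)
    qed
  qed
  have Hd: "(Hk \<xi> k' has_real_derivative Hk \<xi> (Suc k') s) (at s)"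
    if \<xi>: "\<xi> \<in> K" and s: "0 < s" "s < \<tau>1" for \<xi> k' s
  proof -
    obtain C1 where C1: "C1 \<ge> 0" "\<And>\<beta> \<xi> r. \<xi> \<in> K \<Longrightarrow> 0 < s/2 \<Longrightarrow> s/2 \<le> r \<Longrightarrow> r \<le> \<tau>1 \<Longrightarrow>
      \<bar>c \<beta> * ffall (wt \<beta>) (Suc k') * r powr (wt \<beta> - real (Suc k')) * xmon \<xi> \<beta>\<bar>
        \<le> (s/2) powr (- real (Suc k')) * C1 * (\<bar>c \<beta>\<bar> * \<delta> ^ ord \<beta>)"
      using tb[where k'="Suc k'" and a'="s/2"] by blast
    obtain C0 where C0: "C0 \<ge> 0" "\<And>\<beta> \<xi> r. \<xi> \<in> K \<Longrightarrow> 0 < s/2 \<Longrightarrow> s/2 \<le> r \<Longrightarrow> r \<le> \<tau>1 \<Longrightarrow>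
      \<bar>c \<beta> * ffall (wt \<beta>) k' * r powr (wt \<beta> - real k') * xmon \<xi> \<beta>\<bar>
        \<le> (s/2) powr (- real k') * C0 * (\<bar>c \<beta>\<bar> * \<delta> ^ ord \<beta>)"
      using tb[where k'="k'" and a'="s/2"] by blast
    have "((\<lambda>r. infsum (\<lambda>\<beta>. c \<beta> * ffall (wt \<beta>) k' * r powr (wt \<beta> - real k') * xmon \<xi> \<beta>) S)
        has_real_derivative infsum (\<lambda>\<beta>. c \<beta> * ffall (wt \<beta>) (Suc k') * s powr (wt \<beta> - real (Suc k')) * xmon \<xi> \<beta>) S) (at s)"
    proof (rule infsum_has_deriv[where a="s/2" and b="(s + \<tau>1)/2"
          and M="\<lambda>\<beta>. (s/2) powr (- real (Suc k')) * C1 * (\<bar>c \<beta>\<bar> * \<delta> ^ ord \<beta>)"])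
      show "s / 2 < s" "s < (s + \<tau>1) / 2" using s by auto
      show "(\<lambda>\<beta>. (s/2) powr (- real (Suc k')) * C1 * (\<bar>c \<beta>\<bar> * \<delta> ^ ord \<beta>)) summable_on S"
        using csum by (rule summable_on_cmult_right)
    next
      fix \<beta> r assume r: "s / 2 < r" "r < (s + \<tau>1) / 2"
      then have r0: "r > 0" using s by simp
      have d1: "((\<lambda>r. r powr (wt \<beta> - real k')) has_real_derivative
          (wt \<beta> - real k') * r powr (wt \<beta> - real k' - 1)) (at r)"
        by (rule has_real_derivative_powr[OF r0])
      have "((\<lambda>r. (c \<beta> * ffall (wt \<beta>) k') * r powr (wt \<beta> - real k') * xmon \<xi> \<beta>) has_real_derivative
          (c \<beta> * ffall (wt \<beta>) k') * ((wt \<beta> - real k') * r powr (wt \<beta> - real k' - 1)) * xmon \<xi> \<beta>) (at r)"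
        by (intro DERIV_cmult_right DERIV_cmult d1)
      moreover have "(c \<beta> * ffall (wt \<beta>) k') * ((wt \<beta> - real k') * r powr (wt \<beta> - real k' - 1)) * xmon \<xi> \<beta>
          = c \<beta> * ffall (wt \<beta>) (Suc k') * r powr (wt \<beta> - real (Suc k')) * xmon \<xi> \<beta>"
        by (simp add: ffall_Suc algebra_simps)
      ultimately show "((\<lambda>r. c \<beta> * ffall (wt \<beta>) k' * r powr (wt \<beta> - real k') * xmon \<xi> \<beta>) has_real_derivative
          c \<beta> * ffall (wt \<beta>) (Suc k') * r powr (wt \<beta> - real (Suc k')) * xmon \<xi> \<beta>) (at r)"
        by simp
      show "\<bar>c \<beta> * ffall (wt \<beta>) (Suc k') * r powr (wt \<beta> - real (Suc k')) * xmon \<xi> \<beta>\<bar>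
          \<le> (s/2) powr (- real (Suc k')) * C1 * (\<bar>c \<beta>\<bar> * \<delta> ^ ord \<beta>)"
        using r s by (intro C1(2)[OF \<xi>]) auto
    next
      fix r assume r: "s / 2 < r" "r < (s + \<tau>1) / 2"
      show "(\<lambda>\<beta>. c \<beta> * ffall (wt \<beta>) k' * r powr (wt \<beta> - real k') * xmon \<xi> \<beta>) summable_on S"
        by (rule real_summable_dom[OF summable_on_cmult_right[OF csum, of "(s/2) powr (- real k') * C0"]])
           (use r s in \<open>intro C0(2)[OF \<xi>], auto\<close>)
    qed
    then show ?thesis by (simp add: Hk_def[abs_def])
  qed
  have Hit: "\<forall>s. 0 < s \<and> s < \<tau>1 \<longrightarrow> (deriv ^^ k') (\<lambda>s. F (tpow s (diagm a) *v \<xi>)) s = Hk \<xi> k' s"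
    if \<xi>: "\<xi> \<in> K" for \<xi> k'
  proof (induction k')
    case 0
    show ?case
    proof (intro allI impI)
      fix s :: real assume s: "0 < s \<and> s < \<tau>1"
      have "F (tpow s (diagm a) *v \<xi>) = infsum (\<lambda>\<beta>. c \<beta> * xmon (\<chi> i. s powr a i * \<xi> $ i) \<beta>) S"
        using s by (simp add: F tpow_diagm_mulv)
      also have "\<dots> = Hk \<xi> 0 s" unfolding Hk_def
        by (intro infsum_cong) (use s in \<open>simp add: xmon_v\<close>)
      finally show "(deriv ^^ 0) (\<lambda>s. F (tpow s (diagm a) *v \<xi>)) s = Hk \<xi> 0 s" by simp
    qed
  next
    case (Suc k')
    show ?case
    proof (intro allI impI)
      fix s :: real assume s: "0 < s \<and> s < \<tau>1"
      have "\<forall>\<^sub>F r in nhds s. r \<in> {0<..<\<tau>1}" using s by (intro eventually_nhds_in_open) auto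
      then have ev: "\<forall>\<^sub>F r in nhds s. (deriv ^^ k') (\<lambda>s. F (tpow s (diagm a) *v \<xi>)) r = Hk \<xi> k' r"
        by eventually_elim (use Suc in auto)
      have "((deriv ^^ k') (\<lambda>s. F (tpow s (diagm a) *v \<xi>)) has_real_derivative Hk \<xi> (Suc k') s) (at s)"
        using DERIV_cong_ev[OF refl ev refl] Hd[OF \<xi>, of s k'] s by simp
      then show "(deriv ^^ Suc k') (\<lambda>s. F (tpow s (diagm a) *v \<xi>)) s = Hk \<xi> (Suc k') s"
        by (simp add: DERIV_imp_deriv)
    qed
  qed
  obtain Ck where Ck: "Ck \<ge> 0" "\<And>\<beta>. \<bar>ffall (wt \<beta>) k\<bar> * (\<delta> / 2) ^ ord \<beta> \<le> Ck * \<delta> ^ ord \<beta>"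
    using ff_bound[of k] by blast
  define C2 where "C2 = Ck * infsum (\<lambda>\<beta>. \<bar>c \<beta>\<bar> * \<delta> ^ ord \<beta>) S"
  have C20: "C2 \<ge> 0" unfolding C2_def using Ck(1) \<delta>0 by (intro mult_nonneg_nonneg infsum_nonneg) auto
  define y where "y = \<epsilon> * \<tau>1 / (C2 + 1)"
  have y0: "y > 0" using \<epsilon> \<tau>10 C20 by (simp add: y_def)
  define \<tau> where "\<tau> = \<tau>1 * min (1/2) (y powr (1 / \<gamma>))"
  have \<tau>0: "\<tau> > 0" using \<tau>10 y0 by (simp add: \<tau>_def)
  show ?thesis
  proof (intro exI[of _ \<tau>] conjI \<tau>0 allI impI ballI)
    fix t \<xi> assume t: "0 < t \<and> t < \<tau>" and \<xi>: "\<xi> \<in> K"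
    have "\<tau> \<le> \<tau>1 * (1/2)" unfolding \<tau>_def using \<tau>10 by (intro mult_left_mono) auto
    then have tt1: "t < \<tau>1" using t \<tau>10 by linarith
    define u where "u = t / \<tau>1"
    have u0: "u > 0" and u1: "u \<le> 1" using t tt1 \<tau>10 by (auto simp: u_def)
    have "\<tau> \<le> \<tau>1 * y powr (1 / \<gamma>)" unfolding \<tau>_def using \<tau>10 by (intro mult_left_mono) auto
    then have "t < \<tau>1 * y powr (1 / \<gamma>)" using t by linarith
    then have uy: "u < y powr (1 / \<gamma>)" using \<tau>10 by (simp add: u_def pos_divide_less_eq mult.commute)
    have ug: "u powr \<gamma> < y"
    proof -
      have "u powr \<gamma> < (y powr (1 / \<gamma>)) powr \<gamma>" using uy u0 \<gamma>0 by (intro powr_less_mono2) auto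
      also have "\<dots> = y" using \<gamma>0 y0 by (simp add: powr_powr)
      finally show ?thesis .
    qed
    have eqH: "t ^ k * Hk \<xi> k t = infsum (\<lambda>\<beta>. c \<beta> * ffall (wt \<beta>) k * xmon (\<chi> i. t powr a i * \<xi> $ i) \<beta>) S"
    proof -
      have "t ^ k * Hk \<xi> k t = infsum (\<lambda>\<beta>. t ^ k * (c \<beta> * ffall (wt \<beta>) k * t powr (wt \<beta> - real k) * xmon \<xi> \<beta>)) S"
        unfolding Hk_def by (rule infsum_cmult_right'[symmetric])
      also have "\<dots> = infsum (\<lambda>\<beta>. c \<beta> * ffall (wt \<beta>) k * xmon (\<chi> i. t powr a i * \<xi> $ i) \<beta>) S"
      proof (rule infsum_cong)
        fix \<beta>
        have "t ^ k * t powr (wt \<beta> - real k) = t powr wt \<beta>"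
          using t by (simp add: powr_realpow[symmetric] powr_add[symmetric])
        then show "t ^ k * (c \<beta> * ffall (wt \<beta>) k * t powr (wt \<beta> - real k) * xmon \<xi> \<beta>)
            = c \<beta> * ffall (wt \<beta>) k * xmon (\<chi> i. t powr a i * \<xi> $ i) \<beta>"
        proof -
          have x: "xmon (\<chi> i. t powr a i * \<xi> $ i) \<beta> = t powr wt \<beta> * xmon \<xi> \<beta>"
            by (rule xmon_v) (use t in simp)
          have "t ^ k * (c \<beta> * ffall (wt \<beta>) k * t powr (wt \<beta> - real k) * xmon \<xi> \<beta>)
              = c \<beta> * ffall (wt \<beta>) k * (t ^ k * t powr (wt \<beta> - real k)) * xmon \<xi> \<beta>"
            by (simp only: mult_ac)
          also have "\<dots> = c \<beta> * ffall (wt \<beta>) k * xmon (\<chi> i. t powr a i * \<xi> $ i) \<beta>"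
            by (simp only: \<open>t ^ k * t powr (wt \<beta> - real k) = t powr wt \<beta>\<close> x mult.assoc)
          finally show ?thesis .
        qed
      qed
      finally show ?thesis .
    qed
    have tbound: "\<bar>c \<beta> * ffall (wt \<beta>) k * xmon (\<chi> i. t powr a i * \<xi> $ i) \<beta>\<bar>
        \<le> u powr (1 + \<gamma>) * Ck * (\<bar>c \<beta>\<bar> * \<delta> ^ ord \<beta>)" if \<beta>: "\<beta> \<in> S" for \<beta>
    proof -
      have comp: "\<bar>(\<chi> i. t powr a i * \<xi> $ i) $ i\<bar> \<le> (\<chi> i. u powr a i * (\<chi> i. \<rho>) $ i) $ i" for i
      proof -
        have "t powr a i = u powr a i * \<tau>1 powr a i"
          using t \<tau>10 by (simp add: u_def powr_mult[symmetric])
        then have "\<bar>t powr a i * \<xi> $ i\<bar> = u powr a i * \<bar>\<tau>1 powr a i * \<xi> $ i\<bar>"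
          by (simp add: abs_mult)
        also have "\<dots> \<le> u powr a i * \<rho>"
          using box'[OF \<xi> \<tau>10 order_refl, of i] by (intro mult_left_mono) auto
        finally show ?thesis by simp
      qed
      have xm: "\<bar>xmon (\<chi> i. t powr a i * \<xi> $ i) \<beta>\<bar> \<le> u powr wt \<beta> * \<rho> ^ ord \<beta>"
      proof -
        have "xmon (\<chi> i. u powr a i * (\<chi> i. \<rho>) $ i) \<beta> = u powr wt \<beta> * xmon (\<chi> i. \<rho>) \<beta>"
          by (rule xmon_v[OF u0])
        then have "xmon (\<chi> i. u powr a i * (\<chi> i. \<rho>) $ i) \<beta> = u powr wt \<beta> * \<rho> ^ ord \<beta>"
          by (simp only: xmon_const)
        then show ?thesis using xmon_abs_le[OF comp, of \<beta>] by simp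
      qed
      have uw: "u powr wt \<beta> \<le> u powr (1 + \<gamma>)"
        using gap[OF \<beta>] u0 u1 by (intro powr_mono') (auto simp: wt_def)
      have "\<bar>c \<beta> * ffall (wt \<beta>) k * xmon (\<chi> i. t powr a i * \<xi> $ i) \<beta>\<bar>
          \<le> \<bar>c \<beta>\<bar> * \<bar>ffall (wt \<beta>) k\<bar> * (u powr (1 + \<gamma>) * \<rho> ^ ord \<beta>)"
        using xm uw \<rho>0 by (simp add: abs_mult) (intro mult_left_mono order_trans[OF xm] mult_right_mono uw; simp)
      also have "\<dots> = u powr (1 + \<gamma>) * \<bar>c \<beta>\<bar> * (\<bar>ffall (wt \<beta>) k\<bar> * (\<delta> / 2) ^ ord \<beta>)"
        by (simp add: \<rho>_def mult_ac)
      also have "\<dots> \<le> u powr (1 + \<gamma>) * \<bar>c \<beta>\<bar> * (Ck * \<delta> ^ ord \<beta>)"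
        by (intro mult_left_mono Ck(2)) auto
      finally show ?thesis by (simp add: mult_ac)
    qed
    have "\<bar>t ^ k * (deriv ^^ k) (\<lambda>s. F (tpow s (diagm a) *v \<xi>)) t\<bar> = \<bar>t ^ k * Hk \<xi> k t\<bar>"
      using Hit[OF \<xi>, of k] t tt1 by simp
    also have "\<dots> \<le> infsum (\<lambda>\<beta>. u powr (1 + \<gamma>) * Ck * (\<bar>c \<beta>\<bar> * \<delta> ^ ord \<beta>)) S"
      unfolding eqH by (rule infsum_abs_le[OF summable_on_cmult_right[OF csum]]) (rule tbound)
    also have "\<dots> = u powr (1 + \<gamma>) * Ck * infsum (\<lambda>\<beta>. \<bar>c \<beta>\<bar> * \<delta> ^ ord \<beta>) S"
      by (rule infsum_cmult_right')
    also have "\<dots> = u powr (1 + \<gamma>) * C2"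
      by (simp add: C2_def mult_ac)
    also have "\<dots> = u * (u powr \<gamma> * C2)" using u0 by (simp add: powr_add mult_ac)
    also have "\<dots> \<le> u * (y * C2)"
      using ug C20 u0 by (intro mult_left_mono mult_right_mono) auto
    also have "\<dots> \<le> u * (\<epsilon> * \<tau>1)"
    proof -
      have "y * C2 \<le> \<epsilon> * \<tau>1" using \<epsilon> \<tau>10 C20 by (simp add: y_def field_simps)
      then show ?thesis using u0 by (intro mult_left_mono) auto
    qed
    also have "\<dots> = \<epsilon> * t" using \<tau>10 by (simp add: u_def)
    finally show "\<bar>t ^ k * (deriv ^^ k) (\<lambda>s. F (tpow s (diagm a) *v \<xi>)) t\<bar> \<le> \<epsilon> * t" .
  qed
qed

lemma strongly_sub_series:
  assumes F: "\<And>\<xi>. F \<xi> = infsum (\<lambda>\<beta>. c \<beta> * xmon \<xi> \<beta>) S"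
  shows "strongly_subhomogeneous (diagm a) l F"
  unfolding strongly_subhomogeneous_def
proof (intro conjI allI impI)
  show "contracting (diagm a)" by (rule contracting_diag[OF apos])
  have "smooth_near0 F" by (rule smooth_series[OF \<delta>0 csum F])
  then show "C_k_near0 l F" by (auto simp: smooth_near0_def C_k_near0_def)
  fix \<epsilon> :: real and K :: "(real^'n) set" assume \<epsilon>: "\<epsilon> > 0" and K: "compact K"
  have "\<exists>\<tau>>0. \<forall>t. 0 < t \<and> t < \<tau> \<longrightarrow> (\<forall>k\<le>l. \<forall>\<xi>\<in>K. \<bar>t ^ k * (deriv ^^ k) (\<lambda>s. F (tpow s (diagm a) *v \<xi>)) t\<bar> \<le> \<epsilon> * t)"
    by (rule ex_tau_all) (rule main_bound[OF F K \<epsilon>])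
  then show "\<exists>\<tau>>0. \<forall>t. 0 < t \<and> t < \<tau> \<longrightarrow> (\<forall>\<xi>\<in>K. \<forall>k\<le>l. \<bar>t ^ k * (deriv ^^ k) (\<lambda>s. F (tpow s (diagm a) *v \<xi>)) t\<bar> \<le> \<epsilon> * t)"
    by blast
qed

lemma sub_series:
  assumes F: "\<And>\<xi>. F \<xi> = infsum (\<lambda>\<beta>. c \<beta> * xmon \<xi> \<beta>) S"
  shows "subhomogeneous (diagm a) F"
  unfolding subhomogeneous_def
proof (intro conjI allI impI)
  show "contracting (diagm a)" by (rule contracting_diag[OF apos])
  fix \<epsilon> :: real and K :: "(real^'n) set" assume \<epsilon>: "\<epsilon> > 0" and K: "compact K"
  from main_bound[OF F K \<epsilon>, of 0]
  show "\<exists>\<tau>>0. \<forall>t. 0 < t \<and> t < \<tau> \<longrightarrow> (\<forall>\<xi>\<in>K. \<bar>F (tpow t (diagm a) *v \<xi>)\<bar> \<le> \<epsilon> * t)"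
    by simp
qed

end

context
  fixes m :: "'n::finite \<Rightarrow> nat"
  assumes m_pos: "\<forall>j. m j > 0"
begin

lemma wdeg_eq: "wdeg \<beta> (\<lambda>j. 2 * m j) = (\<Sum>j\<in>UNIV. real (\<beta> j) * (1 / (2 * real (m j))))"
  unfolding wdeg_def by (intro sum.cong refl) simp

lemma wdeg_nonneg: "wdeg \<beta> (\<lambda>j. 2 * m j) \<ge> 0"
  unfolding wdeg_def by (intro sum_nonneg) auto

lemma wdeg_int: "\<exists>N::nat. real (\<Prod>j\<in>UNIV. 2 * m j) * wdeg \<beta> (\<lambda>j. 2 * m j) = real N"
proof -
  have "real (\<Prod>i\<in>UNIV. 2 * m i) / real (2 * m j) = real (\<Prod>i\<in>UNIV - {j}. 2 * m i)" for j
  proof -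
    have "(\<Prod>i\<in>UNIV. 2 * m i) = (2 * m j) * (\<Prod>i\<in>UNIV - {j}. 2 * m i)"
      by (subst prod.remove[of UNIV j]) auto
    then show ?thesis using m_pos by (simp del: of_nat_prod)
  qed
  note X = this
  have "real (\<Prod>j\<in>UNIV. 2 * m j) * wdeg \<beta> (\<lambda>j. 2 * m j)
      = (\<Sum>j\<in>UNIV. real (\<beta> j) * real (\<Prod>i\<in>UNIV - {j}. 2 * m i))"
    unfolding wdeg_def sum_distrib_left
  proof (intro sum.cong refl)
    fix j
    have "real (\<Prod>j\<in>UNIV. 2 * m j) * (real (\<beta> j) / real (2 * m j))
        = real (\<beta> j) * (real (\<Prod>j\<in>UNIV. 2 * m j) / real (2 * m j))"
      by (simp only: divide_inverse mult_ac)
    then show "real (\<Prod>j\<in>UNIV. 2 * m j) * (real (\<beta> j) / real (2 * m j))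
        = real (\<beta> j) * real (\<Prod>i\<in>UNIV - {j}. 2 * m i)"
      by (simp only: X)
  qed
  also have "\<dots> = real (\<Sum>j\<in>UNIV. \<beta> j * (\<Prod>i\<in>UNIV - {j}. 2 * m i))"
    by (simp del: of_nat_prod)
  finally show ?thesis by blast
qed

lemma wdeg_gap: "\<exists>\<gamma>>0. \<forall>\<beta>. wdeg \<beta> (\<lambda>j. 2 * m j) > \<theta> \<longrightarrow> wdeg \<beta> (\<lambda>j. 2 * m j) \<ge> \<theta> + \<gamma>"
proof -
  define D where "D = real (\<Prod>j\<in>UNIV. 2 * m j)"
  have "(\<Prod>j\<in>UNIV. 2 * m j) > 0" using m_pos by (intro prod_pos) auto
  then have D0: "D > 0" by (simp only: D_def of_nat_0_less_iff)
  define \<gamma> where "\<gamma> = (real_of_int (\<lfloor>D * \<theta>\<rfloor> + 1)) / D - \<theta>"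
  have \<gamma>0: "\<gamma> > 0"
  proof -
    have "D * \<theta> < real_of_int (\<lfloor>D * \<theta>\<rfloor> + 1)" by linarith
    then show ?thesis using D0 by (simp add: \<gamma>_def field_simps)
  qed
  show ?thesis
  proof (intro exI[of _ \<gamma>] conjI allI impI \<gamma>0)
    fix \<beta> assume w: "\<theta> < wdeg \<beta> (\<lambda>j. 2 * m j)"
    obtain N :: nat where N: "D * wdeg \<beta> (\<lambda>j. 2 * m j) = real N" using wdeg_int[of \<beta>] by (auto simp: D_def)
    have "D * \<theta> < real N" using w D0 N by (metis mult_less_cancel_left_pos)
    then have "\<lfloor>D * \<theta>\<rfloor> < int N" by (simp add: floor_less_iff)
    then have "real_of_int (\<lfloor>D * \<theta>\<rfloor> + 1) \<le> real N" by linarith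
    then have "real_of_int (\<lfloor>D * \<theta>\<rfloor> + 1) / D \<le> wdeg \<beta> (\<lambda>j. 2 * m j)"
      using N D0 by (simp add: divide_le_eq mult.commute)
    then show "\<theta> + \<gamma> \<le> wdeg \<beta> (\<lambda>j. 2 * m j)" by (simp add: \<gamma>_def)
  qed
qed

lemma wdeg_comp_le: "real (\<beta> j) / (2 * real (m j)) \<le> wdeg \<beta> (\<lambda>j. 2 * m j)"
proof -
  have "real (\<beta> j) / real (2 * m j) \<le> wdeg \<beta> (\<lambda>j. 2 * m j)"
    unfolding wdeg_def by (rule member_le_sum) auto
  then show ?thesis by simp
qed

lemma finite_wdeg: "c \<ge> 0 \<Longrightarrow> finite {\<beta>. wdeg \<beta> (\<lambda>j. 2 * m j) = c}"
proof -
  assume c: "c \<ge> 0"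
  define N where "N = nat \<lceil>2 * real (\<Sum>j\<in>UNIV. m j) * c\<rceil>"
  have "{\<beta>. wdeg \<beta> (\<lambda>j. 2 * m j) = c} \<subseteq> {\<beta>. \<forall>j. \<beta> j \<le> N}"
  proof
    fix \<beta> assume "\<beta> \<in> {\<beta>. wdeg \<beta> (\<lambda>j. 2 * m j) = c}"
    then have w: "wdeg \<beta> (\<lambda>j. 2 * m j) = c" by simp
    have "\<beta> j \<le> N" for j
    proof -
    have "real (\<beta> j) / (2 * real (m j)) \<le> c" using wdeg_comp_le[of \<beta> j] w by simp
    then have "real (\<beta> j) \<le> 2 * real (m j) * c" using m_pos[rule_format, of j] by (simp add: divide_le_eq mult_ac)
    also have "\<dots> \<le> 2 * real (\<Sum>j\<in>UNIV. m j) * c"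
      using c by (intro mult_right_mono) (auto intro: member_le_sum)
    also have "\<dots> \<le> real N" unfolding N_def by linarith
    finally show "\<beta> j \<le> N" by simp
    qed
    then show "\<beta> \<in> {\<beta>. \<forall>j. \<beta> j \<le> N}" by simp
  qed
  then show ?thesis using finite_bounded_funs[of N] finite_subset by blast
qed

lemma sum_ge2: "c \<ge> 1 \<Longrightarrow> wdeg \<beta> (\<lambda>j. 2 * m j) = c \<Longrightarrow> (\<Sum>j\<in>UNIV. \<beta> j) \<ge> 2"
proof -
  assume c: "c \<ge> 1" and w: "wdeg \<beta> (\<lambda>j. 2 * m j) = c"
  have "wdeg \<beta> (\<lambda>j. 2 * m j) \<le> (\<Sum>j\<in>UNIV. real (\<beta> j) / 2)"
    unfolding wdeg_def
  proof (rule sum_mono)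
    fix j
    have "(2::real) \<le> real (2 * m j)" using m_pos[rule_format, of j] by simp
    then show "real (\<beta> j) / real (2 * m j) \<le> real (\<beta> j) / 2"
      by (rule divide_left_mono) (use m_pos in auto)
  qed
  then have "2 \<le> real (\<Sum>j\<in>UNIV. \<beta> j)" using w c by (simp add: sum_divide_distrib[symmetric])
  then show ?thesis by linarith
qed

lemma poly_no_lin_wdeg:
  assumes "c \<ge> 1" and P: "P = (\<lambda>\<xi>. \<Sum>\<beta>\<in>{\<beta>. wdeg \<beta> (\<lambda>j. 2 * m j) = c}. C \<beta> * xmon \<xi> \<beta>)"
  shows "poly_no_lin P"
  unfolding poly_no_lin_def
proof (intro exI[of _ "{\<beta>. wdeg \<beta> (\<lambda>j. 2 * m j) = c}"] exI[of _ C] conjI ballI allI)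
  show "finite {\<beta>. wdeg \<beta> (\<lambda>j. 2 * m j) = c}" using assms(1) by (intro finite_wdeg) simp
  fix \<beta> assume "\<beta> \<in> {\<beta>. wdeg \<beta> (\<lambda>j. 2 * m j) = c}"
  then show "2 \<le> (\<Sum>j\<in>UNIV. \<beta> j)" using assms(1) sum_ge2 by simp
next
  fix \<xi> show "P \<xi> = (\<Sum>\<beta>\<in>{\<beta>. wdeg \<beta> (\<lambda>j. 2 * m j) = c}. C \<beta> * xmon \<xi> \<beta>)" by (simp add: P)
qed

lemma xmon_zero: "\<beta> \<noteq> (\<lambda>_. 0) \<Longrightarrow> xmon 0 \<beta> = 0"
proof -
  assume "\<beta> \<noteq> (\<lambda>_. 0)"
  then obtain j where "\<beta> j \<noteq> 0" by auto
  then show ?thesis unfolding xmon_def by (intro prod_zero) auto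
qed

lemma series_zero:
  assumes "\<theta> \<ge> 0"
  shows "(\<Sum>\<^sub>\<infinity>\<beta>\<in>{\<beta>. wdeg \<beta> (\<lambda>j. 2 * m j) > \<theta>}. C \<beta> * xmon 0 \<beta>) = 0"
proof -
  have "C \<beta> * xmon 0 \<beta> = 0" if "wdeg \<beta> (\<lambda>j. 2 * m j) > \<theta>" for \<beta>
  proof -
    have "\<beta> \<noteq> (\<lambda>_. 0)" using that assms by (auto simp: wdeg_def)
    then show ?thesis by (simp add: xmon_zero)
  qed
  then show ?thesis by (intro infsum_0) auto
qed

end

theorem mainTheorem15:
  fixes \<phi> :: "int^'n \<Rightarrow> complex"
    and \<xi>0 \<alpha> :: "real^'n"
    and m :: "'n \<Rightarrow> nat"
    and k :: real
    and A B :: "('n \<Rightarrow> nat) \<Rightarrow> real"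
    and Q Qt R Rt :: "real^'n \<Rightarrow> real"
  assumes phi_S: "Schwartz_d \<phi>"
    and sup1: "(SUP \<xi>. cmod (fhat \<phi> \<xi>)) = 1"
    and xi0: "\<xi>0 \<in> Omega \<phi>"
    and m_pos: "\<forall>j. m j > 0"
    and k_ge: "k \<ge> 1"
    and Q_def: "Q = (\<lambda>\<xi>. \<Sum>\<beta>\<in>{\<beta>. wdeg \<beta> (\<lambda>j. 2 * m j) = 1}. A \<beta> * xmon \<xi> \<beta>)"
    and R_def: "R = (\<lambda>\<xi>. \<Sum>\<beta>\<in>{\<beta>. wdeg \<beta> (\<lambda>j. 2 * m j) = k}. B \<beta> * xmon \<xi> \<beta>)"
    and Qt_def: "Qt = (\<lambda>\<xi>. \<Sum>\<^sub>\<infinity>\<beta>\<in>{\<beta>. wdeg \<beta> (\<lambda>j. 2 * m j) > 1}. A \<beta> * xmon \<xi> \<beta>)"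
    and Rt_def: "Rt = (\<lambda>\<xi>. \<Sum>\<^sub>\<infinity>\<beta>\<in>{\<beta>. wdeg \<beta> (\<lambda>j. 2 * m j) > k}. B \<beta> * xmon \<xi> \<beta>)"
    and R_posdef: "\<forall>\<xi>. R \<xi> \<ge> 0 \<and> (R \<xi> = 0 \<longleftrightarrow> \<xi> = 0)"
    and expansion: "\<exists>U. open U \<and> 0 \<in> U
       \<and> (\<forall>\<xi>\<in>U. (\<lambda>\<beta>. norm (A \<beta> * xmon \<xi> \<beta>)) summable_on {\<beta>. wdeg \<beta> (\<lambda>j. 2 * m j) > 1})
       \<and> (\<forall>\<xi>\<in>U. (\<lambda>\<beta>. norm (B \<beta> * xmon \<xi> \<beta>)) summable_on {\<beta>. wdeg \<beta> (\<lambda>j. 2 * m j) > k})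
       \<and> uniform_limit U (\<lambda>F \<xi>. \<Sum>\<beta>\<in>F. A \<beta> * xmon \<xi> \<beta>) Qt
           (finite_subsets_at_top {\<beta>. wdeg \<beta> (\<lambda>j. 2 * m j) > 1})
       \<and> uniform_limit U (\<lambda>F \<xi>. \<Sum>\<beta>\<in>F. B \<beta> * xmon \<xi> \<beta>) Rt
           (finite_subsets_at_top {\<beta>. wdeg \<beta> (\<lambda>j. 2 * m j) > k})
       \<and> (\<forall>\<xi>\<in>U. Gamma_at \<phi> \<xi>0 \<xi> =
           \<i> * complex_of_real (\<alpha> \<bullet> \<xi>) - \<i> * complex_of_real (Q \<xi> + Qt \<xi>)
             - complex_of_real (R \<xi> + Rt \<xi>))"
  shows "(k = 1 \<longrightarrow> pos_hom_type \<phi> \<xi>0 \<alpha> Q R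
            \<and> hom_order R = (\<Sum>j\<in>UNIV. 1 / (2 * real (m j))))
       \<and> (k > 1 \<and> (\<forall>\<xi>. \<bar>Q \<xi>\<bar> = 0 \<longleftrightarrow> \<xi> = 0) \<longrightarrow> imag_hom_type \<phi> \<xi>0 \<alpha> Q R
            \<and> hom_order (\<lambda>\<xi>. \<bar>Q \<xi>\<bar>) = (\<Sum>j\<in>UNIV. 1 / (2 * real (m j))))"
proof -
  define d where "d j = 1 / (2 * real (m j))" for j
  have dpos: "\<And>j. d j > 0" using m_pos by (simp add: d_def)
  have wd: "\<And>\<beta>. wdeg \<beta> (\<lambda>j. 2 * m j) = (\<Sum>j\<in>UNIV. real (\<beta> j) * d j)"
    using wdeg_eq[OF m_pos] by (simp add: d_def)
  define E0 where "E0 = diagm d"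
  obtain U where U: "open U" "0 \<in> U"
    and smA: "\<And>\<xi>. \<xi> \<in> U \<Longrightarrow> (\<lambda>\<beta>. norm (A \<beta> * xmon \<xi> \<beta>)) summable_on {\<beta>. wdeg \<beta> (\<lambda>j. 2 * m j) > 1}"
    and smB: "\<And>\<xi>. \<xi> \<in> U \<Longrightarrow> (\<lambda>\<beta>. norm (B \<beta> * xmon \<xi> \<beta>)) summable_on {\<beta>. wdeg \<beta> (\<lambda>j. 2 * m j) > k}"
    and GU: "\<forall>\<xi>\<in>U. Gamma_at \<phi> \<xi>0 \<xi> =
           \<i> * complex_of_real (\<alpha> \<bullet> \<xi>) - \<i> * complex_of_real (Q \<xi> + Qt \<xi>)
             - complex_of_real (R \<xi> + Rt \<xi>)"
    using expansion by blast
  obtain \<delta>Q where \<delta>Q: "\<delta>Q > 0" "(\<lambda>\<beta>. \<bar>A \<beta>\<bar> * \<delta>Q ^ ord \<beta>) summable_on {\<beta>. wdeg \<beta> (\<lambda>j. 2 * m j) > 1}"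
    using get_delta[OF U(1) U(2) smA] by blast
  obtain \<delta>R where \<delta>R: "\<delta>R > 0" "(\<lambda>\<beta>. \<bar>B \<beta>\<bar> * \<delta>R ^ ord \<beta>) summable_on {\<beta>. wdeg \<beta> (\<lambda>j. 2 * m j) > k}"
    using get_delta[OF U(1) U(2) smB] by blast
  have QtF: "\<And>\<xi>. Qt \<xi> = (\<Sum>\<^sub>\<infinity>\<beta>\<in>{\<beta>. wdeg \<beta> (\<lambda>j. 2 * m j) > 1}. A \<beta> * xmon \<xi> \<beta>)"
    by (simp add: Qt_def)
  have RtF: "\<And>\<xi>. Rt \<xi> = (\<Sum>\<^sub>\<infinity>\<beta>\<in>{\<beta>. wdeg \<beta> (\<lambda>j. 2 * m j) > k}. B \<beta> * xmon \<xi> \<beta>)"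
    by (simp add: Rt_def)
  have smQ: "smooth_near0 Qt" by (rule smooth_series[OF \<delta>Q QtF])
  have smR: "smooth_near0 Rt" by (rule smooth_series[OF \<delta>R RtF])
  have Qt0: "Qt 0 = 0" unfolding Qt_def by (rule series_zero[OF m_pos]) simp
  have Rt0: "Rt 0 = 0" unfolding Rt_def by (rule series_zero[OF m_pos]) (use k_ge in simp)
  have pnlQ: "poly_no_lin Q" by (rule poly_no_lin_wdeg[OF m_pos _ Q_def]) simp
  have pnlR: "poly_no_lin R" by (rule poly_no_lin_wdeg[OF m_pos k_ge R_def])
  have GF: "Gamma_form \<phi> \<xi>0 \<alpha> Q Qt R Rt"
    unfolding Gamma_form_def using U GU pnlQ pnlR smQ smR Qt0 Rt0 by blast
  have Qcont: "continuous_on UNIV Q" unfolding Q_def by (rule continuous_poly)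
  have Rcont: "continuous_on UNIV R" unfolding R_def by (rule continuous_poly)
  have Rnn: "\<And>\<xi>. R \<xi> \<ge> 0" and Rz: "\<And>\<xi>. R \<xi> = 0 \<longleftrightarrow> \<xi> = 0" using R_posdef by auto
  have homQ: "homogeneous_wrt E0 Q" unfolding Q_def E0_def
    by (rule hom_poly) (simp add: wd[symmetric])
  obtain \<gamma>Q where \<gamma>Q: "\<gamma>Q > 0" "\<And>\<beta>. wdeg \<beta> (\<lambda>j. 2 * m j) > 1 \<Longrightarrow> wdeg \<beta> (\<lambda>j. 2 * m j) \<ge> 1 + \<gamma>Q"
    using wdeg_gap[OF m_pos, of 1] by blast
  obtain \<gamma>R where \<gamma>R: "\<gamma>R > 0" "\<And>\<beta>. wdeg \<beta> (\<lambda>j. 2 * m j) > k \<Longrightarrow> wdeg \<beta> (\<lambda>j. 2 * m j) \<ge> k + \<gamma>R"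
    using wdeg_gap[OF m_pos, of k] by blast
  have gapQ: "\<And>\<beta>. \<beta> \<in> {\<beta>. wdeg \<beta> (\<lambda>j. 2 * m j) > 1} \<Longrightarrow> (\<Sum>j\<in>UNIV. real (\<beta> j) * d j) \<ge> 1 + \<gamma>Q"
    using \<gamma>Q(2) wd by simp
  show ?thesis
  proof (rule conjI; rule impI)
    assume k1: "k = 1"
    have homR: "homogeneous_wrt E0 R" unfolding R_def E0_def
      by (rule hom_poly) (simp add: wd[symmetric] k1)
    have pR: "pos_homogeneous R" and hoR: "hom_order R = sum d UNIV"
      using pos_hom_from_diag[OF Rcont Rnn Rz homR[unfolded E0_def] dpos] by auto
    have subQ: "subhomogeneous E0 Qt"
      unfolding E0_def by (rule sub_series[OF \<delta>Q dpos \<gamma>Q(1) gapQ QtF])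
    have gapR: "\<And>\<beta>. \<beta> \<in> {\<beta>. wdeg \<beta> (\<lambda>j. 2 * m j) > k} \<Longrightarrow> (\<Sum>j\<in>UNIV. real (\<beta> j) * d j) \<ge> 1 + \<gamma>R"
      using \<gamma>R(2) wd k1 by simp
    have subR: "subhomogeneous E0 Rt"
      unfolding E0_def by (rule sub_series[OF \<delta>R dpos \<gamma>R(1) gapR RtF])
    have "pos_hom_type \<phi> \<xi>0 \<alpha> Q R"
      unfolding pos_hom_type_def
      by (intro exI[of _ Qt] exI[of _ Rt] conjI GF pR bexI[of _ E0] homQ subQ subR)
         (simp add: Exps_def homR)
    moreover have "hom_order R = (\<Sum>j\<in>UNIV. 1 / (2 * real (m j)))" using hoR by (simp add: d_def)
    ultimately show "pos_hom_type \<phi> \<xi>0 \<alpha> Q R \<and> hom_order R = (\<Sum>j\<in>UNIV. 1 / (2 * real (m j)))" by blast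
  next
    assume kQ: "1 < k \<and> (\<forall>\<xi>. \<bar>Q \<xi>\<bar> = 0 \<longleftrightarrow> \<xi> = 0)"
    then have k1: "k > 1" and Qz: "\<And>\<xi>. \<bar>Q \<xi>\<bar> = 0 \<longleftrightarrow> \<xi> = 0" by auto
    define d' where "d' j = 1 / k * d j" for j
    have d'pos: "\<And>j. d' j > 0" using dpos k1 by (simp add: d'_def)
    have "d' = (\<lambda>i. 1 / k * d i)" by (simp add: d'_def fun_eq_iff)
    then have E': "(1 / k) *\<^sub>R E0 = diagm d'" by (simp only: E0_def scaleR_diagm)
    have homR: "homogeneous_wrt (diagm d') R" unfolding R_def
    proof (rule hom_poly)
      fix \<beta> assume "\<beta> \<in> {\<beta>. wdeg \<beta> (\<lambda>j. 2 * m j) = k}"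
      then have "(\<Sum>j\<in>UNIV. real (\<beta> j) * d j) = k" using wd by simp
      then show "(\<Sum>j\<in>UNIV. real (\<beta> j) * d' j) = 1"
        using k1 by (simp add: d'_def sum_divide_distrib[symmetric] mult_ac)
    qed
    have pR: "pos_homogeneous R"
      using pos_hom_from_diag[OF Rcont Rnn Rz homR d'pos] by auto
    have Qacont: "continuous_on UNIV (\<lambda>\<xi>. \<bar>Q \<xi>\<bar>)" using Qcont by (intro continuous_intros)
    have pQ: "pos_homogeneous (\<lambda>\<xi>. \<bar>Q \<xi>\<bar>)" and hoQ: "hom_order (\<lambda>\<xi>. \<bar>Q \<xi>\<bar>) = sum d UNIV"
      using pos_hom_from_diag[OF Qacont _ Qz hom_abs[OF homQ[unfolded E0_def]] dpos] by auto
    have stQ: "strongly_subhomogeneous E0 2 Qt"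
      unfolding E0_def by (rule strongly_sub_series[OF \<delta>Q dpos \<gamma>Q(1) gapQ QtF])
    have gapR: "\<And>\<beta>. \<beta> \<in> {\<beta>. wdeg \<beta> (\<lambda>j. 2 * m j) > k} \<Longrightarrow> (\<Sum>j\<in>UNIV. real (\<beta> j) * d' j) \<ge> 1 + \<gamma>R / k"
    proof -
      fix \<beta> assume "\<beta> \<in> {\<beta>. wdeg \<beta> (\<lambda>j. 2 * m j) > k}"
      then have "(\<Sum>j\<in>UNIV. real (\<beta> j) * d j) \<ge> k + \<gamma>R" using \<gamma>R(2) wd by simp
      moreover have "(\<Sum>j\<in>UNIV. real (\<beta> j) * d' j) = (\<Sum>j\<in>UNIV. real (\<beta> j) * d j) / k"
        by (simp add: d'_def sum_divide_distrib[symmetric] mult_ac)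
      ultimately show "(\<Sum>j\<in>UNIV. real (\<beta> j) * d' j) \<ge> 1 + \<gamma>R / k"
        using k1 by (simp add: field_simps)
    qed
    have \<gamma>R': "\<gamma>R / k > 0" using \<gamma>R(1) k1 by simp
    have stR: "strongly_subhomogeneous (diagm d') 1 Rt"
      by (rule strongly_sub_series[OF \<delta>R d'pos \<gamma>R' gapR RtF])
    have e1: "E0 \<in> Exps (\<lambda>\<xi>. \<bar>Q \<xi>\<bar>)" using hom_abs[OF homQ] by (simp add: Exps_def)
    have e2: "homogeneous_wrt ((1 / k) *\<^sub>R E0) R" using homR E' by simp
    have e3: "strongly_subhomogeneous ((1 / k) *\<^sub>R E0) 1 Rt" using stR E' by simp
    have "imag_hom_type \<phi> \<xi>0 \<alpha> Q R"
      unfolding imag_hom_type_def using GF pQ pR e1 e2 e3 stQ k1 by blast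
    moreover have "hom_order (\<lambda>\<xi>. \<bar>Q \<xi>\<bar>) = (\<Sum>j\<in>UNIV. 1 / (2 * real (m j)))" using hoQ by (simp add: d_def)
    ultimately show "imag_hom_type \<phi> \<xi>0 \<alpha> Q R \<and> hom_order (\<lambda>\<xi>. \<bar>Q \<xi>\<bar>) = (\<Sum>j\<in>UNIV. 1 / (2 * real (m j)))"
      by blast
  qed
qed

end
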